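(* Assume $\nu$ satisfies Assumption (A) and $\mathcal M$ satisfies Assumption (B). Let $n\ge2$, assume $M_n$ is a $\overline Z^{1:(n-1)}$-measurable positive integer random variable, and let $\mathcal M^{n-1}:=\mathcal M\cup\{\overline g_1,\dots,\overline g_{n-1}\}$. Then for all $\epsilon>0$, almost surely, $$\mathbb{P}\Big[\sup_{g,h\in\mathcal M^{n-1}}\Big|\mathrm{Cov}\big[g(Z),h(Z)\mid\overline Z^{1:\infty}\big]-\mathrm{Cov}_{\overline Z^n}(g,h)\Big|\ge\epsilon\ \Big|\ \overline Z^{1:(n-1)}\Big]\le C\exp\!\Big(-cM_n\,\phi\Big(\frac{\epsilon}{6K_\infty^{n-1}K_{\mathcal L}^{n-1}}\Big)\Big),$$ where $K_\infty^{n-1}=\max(K_\infty,\|\overline g_1\|_{L^\infty},\dots,\|\overline g_{n-1}\|_{L^\infty})$ and $K_{\mathcal L}^{n-1}=\max(K_{\mathcal L},\|\overline g_1\|_{\mathcal L},\dots,\|\overline g_{n-1}\|_{\mathcal L})$.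
   Context: $Z$ is an $\mathbb{R}^d$-valued random vector with law $\nu$; $L^2_{\nu,0}(\mathbb{R}^d)=\{g\in L^2_\nu:\int g\,d\nu=0\}$, $\|g\|=\sqrt{\mathrm{Var}[g(Z)]}$. $\mathcal P\subset\mathbb{R}^p$; $f_\mu$ continuous, in $L^2_\nu$; $g_\mu=f_\mu-\mathbb{E}[f_\mu(Z)]$; $\mathcal M=\{g_\mu:\mu\in\mathcal P\}$; $d_n(\mathcal M)=\inf_{V_n}\sup_\mu\inf_{h\in V_n}\|g_\mu-h\|$ over $n$-dimensional subspaces. $\mathcal L$: Lipschitz functions, $\|f\|_{\mathcal L}$ Lipschitz constant. For $\overline Z=(Z_k)_{k\le M}$: $\mathbb{E}_{\overline Z}(f)=\frac1M\sum_kf(Z_k)$, $\mathrm{Cov}_{\overline Z}(f,g)=\mathbb{E}_{\overline Z}(fg)-\mathbb{E}_{\overline Z}(f)\mathbb{E}_{\overline Z}(g)$, $\mathrm{Var}_{\overline Z}(f)=\mathrm{Cov}_{\overline Z}(f,f)$. $\overline Z^n=(Z^n_k)_{1\le k\le M_n}$, all $Z^n_k$ i.i.d. with law $\nu$, independent of $Z$; $\overline Z^{1:n}=(\overline Z^m)_{m\le n}$, $\overline Z^{1:\infty}=(\overline Z^n)_n$. MC-greedy algorithm: $\overline\mu_1\in\operatorname{argmax}_\mu\mathrm{Var}_{\overline Z^1}(g_\mu)$ with $g_{\overline\mu_1}\ne0$; for $m\ge2$, $\overline\mu_m\in\operatorname{argmax}_\mu\inf_{\lambda\in\mathbb{R}^{m-1}}\mathrm{Var}_{\overline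 Z^m}(g_\mu-\sum_{i<m}\lambda_ig_{\overline\mu_i})$ with $g_{\overline\mu_m}\notin\mathrm{Span}\{g_{\overline\mu_i}\}_{i<m}$. $(\overline g_m)$ is the Gram–Schmidt orthonormalization of $(g_{\overline\mu_m})$ for $(u,v)\mapsto\mathrm{Cov}[u(Z),v(Z)\mid\overline Z^{1:\infty}]$; $\overline g_m$ is $\overline Z^{1:m}$-measurable. Assumption (A): $\exists\alpha>1,\beta>0$, $\int_{\mathbb{R}^d}e^{\beta|x|^\alpha}d\nu<\infty$. $\phi(\kappa)=\kappa^2\mathbf 1_{\kappa\le1}+\kappa^\alpha\mathbf 1_{\kappa>1}$ ($d=1$), $(\kappa/\log(2+1/\kappa))^2\mathbf 1_{\kappa\le1}+\kappa^\alpha\mathbf 1_{\kappa>1}$ ($d=2$), $\kappa^d\mathbf 1_{\kappa\le1}+\kappa^\alpha\mathbf 1_{\kappa>1}$ ($d\ge3$). $c,C>0$ are constants (existing under (A) by Fournier–Guillin) such that for all $M$, all i.i.d. $\overline Z=(Z_k)_{k\le M}$ of law $\nu$, all $\kappa>0$: $\mathbb{P}[\sup_{\|f\|_{\mathcal L}\le1}|\mathbb{E}[f(Z)]-\mathbb{E}_{\overline Z}(f)|\ge\kappa]\le Ce^{-cM\phi(\kappa)}$. Assumption (B): (B1) $\mathcal M$ compact in $L^2_{\nu,0}$, $K_2=\sup_\mu\|g_\mu\|<\infty$; (B2) $\mathcal M\subset\mathcal L$, $K_{\mathcal L}=\sup_\mu\|g_\mu\|_{\mathcal L}<\infty$; (B3)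 $\mathcal M\subset L^\infty$, $K_\infty=\sup_\mu\|g_\mu\|_{L^\infty}<\infty$; (B4) $d_n(\mathcal M)>0$ for all $n$. *)

theory Defs
  imports "HOL-Probability.Probability"
begin

definition cov_nu :: "'x measure \<Rightarrow> ('x \<Rightarrow> real) \<Rightarrow> ('x \<Rightarrow> real) \<Rightarrow> real" where
  "cov_nu \<nu> u v = (\<integral>x. u x * v x \<partial>\<nu>) - (\<integral>x. u x \<partial>\<nu>) * (\<integral>x. v x \<partial>\<nu>)"

definition l2norm :: "'x measure \<Rightarrow> ('x \<Rightarrow> real) \<Rightarrow> real" where
  "l2norm \<nu> u = sqrt (cov_nu \<nu> u u)"

definition L2_0 :: "'x measure \<Rightarrow> ('x \<Rightarrow> real) set" where
  "L2_0 \<nu> = {u. u \<in> borel_measurable \<nu> \<and> integrable \<nu> (\<lambda>x. (u x)\<^sup>2) \<and> (\<integral>x. u x \<partial>\<nu>) = 0}"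

definition emp_mean :: "(nat \<Rightarrow> 'x) \<Rightarrow> nat \<Rightarrow> ('x \<Rightarrow> real) \<Rightarrow> real" where
  "emp_mean zs M u = (\<Sum>k<M. u (zs k)) / real M"

definition emp_cov :: "(nat \<Rightarrow> 'x) \<Rightarrow> nat \<Rightarrow> ('x \<Rightarrow> real) \<Rightarrow> ('x \<Rightarrow> real) \<Rightarrow> real" where
  "emp_cov zs M u v = emp_mean zs M (\<lambda>x. u x * v x) - emp_mean zs M u * emp_mean zs M v"

definition lipconst :: "('x::metric_space \<Rightarrow> real) \<Rightarrow> real" where
  "lipconst u = Inf {L. L-lipschitz_on UNIV u}"

definition supnorm :: "('x \<Rightarrow> real) \<Rightarrow> real" where
  "supnorm u = (SUP x. \<bar>u x\<bar>)"

definition gmu :: "'x measure \<Rightarrow> ('p \<Rightarrow> 'x \<Rightarrow> real) \<Rightarrow> 'p \<Rightarrow> 'x \<Rightarrow> real" where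
  "gmu \<nu> f \<mu> = (\<lambda>x. f \<mu> x - (\<integral>y. f \<mu> y \<partial>\<nu>))"

definition l2_compact :: "'x measure \<Rightarrow> ('x \<Rightarrow> real) set \<Rightarrow> bool" where
  "l2_compact \<nu> S \<longleftrightarrow> S \<subseteq> L2_0 \<nu> \<and>
     (\<forall>s :: nat \<Rightarrow> 'x \<Rightarrow> real. (\<forall>k. s k \<in> S) \<longrightarrow>
        (\<exists>l\<in>S. \<exists>r :: nat \<Rightarrow> nat. strict_mono r \<and> (\<lambda>k. l2norm \<nu> (\<lambda>x. s (r k) x - l x)) \<longlonglongrightarrow> 0))"

definition kolmogorov_width :: "'x measure \<Rightarrow> ('x \<Rightarrow> real) set \<Rightarrow> nat \<Rightarrow> real" where
  "kolmogorov_width \<nu> S n =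
     (INF b \<in> {b :: nat \<Rightarrow> 'x \<Rightarrow> real. \<forall>i<n. b i \<in> L2_0 \<nu>}.
        SUP u \<in> S. INF lam \<in> (UNIV :: (nat \<Rightarrow> real) set).
          l2norm \<nu> (\<lambda>x. u x - (\<Sum>i<n. lam i * b i x)))"

text \<open>The rate function phi (d = dimension, alpha from Assumption (A)).\<close>
definition phi :: "nat \<Rightarrow> real \<Rightarrow> real \<Rightarrow> real" where
  "phi d \<alpha> \<kappa> =
    (if \<kappa> > 1 then \<kappa> powr \<alpha>
     else if d = 1 then \<kappa>\<^sup>2
     else if d = 2 then (\<kappa> / ln (2 + 1 / \<kappa>))\<^sup>2
     else \<kappa> ^ d)"

primrec gs_list :: "(('x \<Rightarrow> real) \<Rightarrow> ('x \<Rightarrow> real) \<Rightarrow> real) \<Rightarrow> (nat \<Rightarrow> 'x \<Rightarrow> real) \<Rightarrow> nat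
    \<Rightarrow> ('x \<Rightarrow> real) list" where
  "gs_list ip f 0 = []"
| "gs_list ip f (Suc m) =
     (let L = gs_list ip f m;
          w = (\<lambda>x. f m x - sum_list (map (\<lambda>v. ip (f m) v * v x) L))
      in L @ [(\<lambda>x. w x / sqrt (ip w w))])"

text \<open>m-th Gram--Schmidt vector (m >= 1) of the sequence f 1, f 2, ...\<close>
definition gram_schmidt :: "(('x \<Rightarrow> real) \<Rightarrow> ('x \<Rightarrow> real) \<Rightarrow> real) \<Rightarrow> (nat \<Rightarrow> 'x \<Rightarrow> real) \<Rightarrow> nat
    \<Rightarrow> 'x \<Rightarrow> real" where
  "gram_schmidt ip f m = gs_list ip (\<lambda>i. f (Suc i)) m ! (m - 1)"

text \<open>sigma-algebra generated by the batches 1..m (each batch is the whole i.i.d. sequence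
  Zs i 0, Zs i 1, ...; the batch actually used is its first M i entries).\<close>
definition batch_sigma :: "'w measure \<Rightarrow> (nat \<Rightarrow> nat \<Rightarrow> 'w \<Rightarrow> 'x::topological_space) \<Rightarrow> nat \<Rightarrow> 'w measure" where
  "batch_sigma P Zs m = sigma (space P)
     {Zs i k -` A \<inter> space P | i k A. 1 \<le> i \<and> i \<le> m \<and> A \<in> sets borel}"

text \<open>The objective of the MC-greedy step m with sample batch zs of size Mm, given the
  previously selected parameters mus 1, ..., mus (m-1).\<close>
definition greedy_obj :: "'x measure \<Rightarrow> ('p \<Rightarrow> 'x \<Rightarrow> real) \<Rightarrow> (nat \<Rightarrow> 'x) \<Rightarrow> nat \<Rightarrow> (nat \<Rightarrow> 'p)
    \<Rightarrow> nat \<Rightarrow> 'p \<Rightarrow> real" where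
  "greedy_obj \<nu> f zs Mm mus m \<mu> =
     (INF lam \<in> (UNIV :: (nat \<Rightarrow> real) set).
        (let h = (\<lambda>x. gmu \<nu> f \<mu> x - (\<Sum>i\<in>{1..<m}. lam i * gmu \<nu> f (mus i) x)) in emp_cov zs Mm h h))"

end

theory Submission
  imports Defs
begin

definition good :: "('x::metric_space \<Rightarrow> real) \<Rightarrow> bool" where
  "good u \<longleftrightarrow> bdd_above (range (\<lambda>x. \<bar>u x\<bar>)) \<and> (\<exists>L. L-lipschitz_on UNIV u)"

lemma good_add: "good u \<Longrightarrow> good v \<Longrightarrow> good (\<lambda>x. u x + v x)"
proof -
  assume u: "good u" and v: "good v"
  then obtain a b where a: "\<And>x. \<bar>u x\<bar> \<le> a" and b: "\<And>x. \<bar>v x\<bar> \<le> b"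
    unfolding good_def bdd_above_def by blast
  obtain L1 L2 where "L1-lipschitz_on UNIV u" "L2-lipschitz_on UNIV v" using u v unfolding good_def by blast
  then have "(L1+L2)-lipschitz_on UNIV (\<lambda>x. u x + v x)" by (rule lipschitz_on_add)
  moreover have "\<And>x. \<bar>u x + v x\<bar> \<le> a + b" using a b by (meson abs_triangle_ineq add_mono order_trans)
  ultimately show ?thesis unfolding good_def bdd_above_def by blast
qed

lemma good_cmult: "good u \<Longrightarrow> good (\<lambda>x. c * u x)"
proof -
  assume u: "good u"
  then obtain a where a: "\<And>x. \<bar>u x\<bar> \<le> a"
    unfolding good_def bdd_above_def by blast
  obtain L1 where "L1-lipschitz_on UNIV u" using u unfolding good_def by blast
  then have "(\<bar>c\<bar>*L1)-lipschitz_on UNIV (\<lambda>x. c * u x)" by (rule lipschitz_on_cmult_real)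
  moreover have "\<And>x. \<bar>c * u x\<bar> \<le> \<bar>c\<bar> * a" using a by (simp add: abs_mult mult_left_mono)
  ultimately show ?thesis unfolding good_def bdd_above_def by blast
qed

lemma good_zero: "good (\<lambda>x. 0)"
  unfolding good_def using lipschitz_on_constant[of UNIV 0] by auto

lemma good_diff: "good u \<Longrightarrow> good v \<Longrightarrow> good (\<lambda>x. u x - v x)"
  using good_add[of u "\<lambda>x. (-1) * v x"] good_cmult[of v "-1"] by simp

lemma good_div: "good u \<Longrightarrow> good (\<lambda>x. u x / c)"
  using good_cmult[of u "1/c"] by simp

lemma good_sum_list: "(\<And>v. v \<in> set L \<Longrightarrow> good (h v)) \<Longrightarrow> good (\<lambda>x. sum_list (map (\<lambda>v. h v x) L))"
  by (induction L) (auto intro: good_add good_zero)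

lemma good_gs_list: "(\<And>i. i < m \<Longrightarrow> good (f i)) \<Longrightarrow> v \<in> set (gs_list ip f m) \<Longrightarrow> good v"
proof (induction m arbitrary: v)
  case 0 then show ?case by simp
next
  case (Suc m)
  let ?L = "gs_list ip f m"
  have IH: "\<And>v. v \<in> set ?L \<Longrightarrow> good v" using Suc by auto
  let ?w = "\<lambda>x. f m x - sum_list (map (\<lambda>v. ip (f m) v * v x) ?L)"
  have "good ?w"
  proof (rule good_diff)
    show "good (f m)" using Suc.prems(1) by simp
    show "good (\<lambda>x. \<Sum>v\<leftarrow>?L. ip (f m) v * v x)"
      by (rule good_sum_list) (rule good_cmult, rule IH)
  qed
  then have "good (\<lambda>x. ?w x / sqrt (ip ?w ?w))" by (rule good_div)
  then show ?case using Suc.prems(2) IH by (auto simp: Let_def)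
qed

lemma length_gs_list[simp]: "length (gs_list ip f m) = m"
  by (induction m) (auto simp: Let_def)

lemma good_gram_schmidt: "1 \<le> m \<Longrightarrow> (\<And>i. 1 \<le> i \<Longrightarrow> i \<le> m \<Longrightarrow> good (f i)) \<Longrightarrow> good (gram_schmidt ip f m)"
  unfolding gram_schmidt_def
  by (rule good_gs_list[of m "\<lambda>i. f (Suc i)" _ ip]) auto

lemma good_bdd: "good u \<Longrightarrow> bdd_above (range (\<lambda>x. \<bar>u x\<bar>))" by (simp add: good_def)

lemma abs_le_supnorm: "good u \<Longrightarrow> \<bar>u x\<bar> \<le> supnorm u"
  unfolding supnorm_def by (rule cSUP_upper) (auto dest: good_bdd)

lemma supnorm_le_iff: "good u \<Longrightarrow> supnorm u \<le> t \<longleftrightarrow> (\<forall>x. \<bar>u x\<bar> \<le> t)"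
  unfolding supnorm_def by (subst cSUP_le_iff) (auto dest: good_bdd)

lemma lipconst_le_iff:
  fixes u :: "'x::metric_space \<Rightarrow> real"
  assumes "good u" shows "lipconst u \<le> t \<longleftrightarrow> t-lipschitz_on UNIV u"
proof
  let ?S = "{L. L-lipschitz_on UNIV u}"
  have ne: "?S \<noteq> {}" using assms unfolding good_def by auto
  have bb: "bdd_below ?S" unfolding bdd_below_def using lipschitz_on_nonneg by blast
  assume le: "lipconst u \<le> t"
  have ex: "\<exists>L. L-lipschitz_on UNIV u \<and> L < t + e" if "e > 0" for e
  proof -
    have "Inf ?S < t + e" using le that unfolding lipconst_def by simp
    then show ?thesis using cInf_less_iff[OF ne bb] by auto
  qed
  show "t-lipschitz_on UNIV u"
  proof (rule lipschitz_onI)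
    show "0 \<le> t"
    proof (rule ccontr)
      assume "\<not> 0 \<le> t"
      then obtain L where "L-lipschitz_on UNIV u" "L < t + (-t)" using ex[of "-t"] by auto
      then show False using lipschitz_on_nonneg by fastforce
    qed
    fix x y :: 'x
    show "dist (u x) (u y) \<le> t * dist x y"
    proof (rule field_le_epsilon)
      fix e :: real assume e: "0 < e"
      define d where "d = dist x y"
      have d0: "d \<ge> 0" unfolding d_def by simp
      obtain L where L: "L-lipschitz_on UNIV u" "L < t + e / (d + 1)" using ex[of "e/(d+1)"] e d0 by auto
      have "dist (u x) (u y) \<le> L * d" using lipschitz_onD[OF L(1)] unfolding d_def by auto
      also have "\<dots> \<le> (t + e / (d+1)) * d" using L(2) d0 by (simp add: mult_right_mono)
      also have "\<dots> = t * d + e * (d / (d+1))" using d0 by (simp add: field_simps)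
      also have "\<dots> \<le> t * d + e * 1" using d0 e by (intro add_left_mono mult_left_mono) auto
      finally show "dist (u x) (u y) \<le> t * dist x y + e" unfolding d_def by simp
    qed
  qed
next
  let ?S = "{L. L-lipschitz_on UNIV u}"
  have bb: "bdd_below ?S" unfolding bdd_below_def using lipschitz_on_nonneg by blast
  assume "t-lipschitz_on UNIV u"
  then show "lipconst u \<le> t" unfolding lipconst_def by (intro cInf_lower bb) auto
qed

lemma lipconst_lip: "good u \<Longrightarrow> (lipconst u)-lipschitz_on UNIV u"
  using lipconst_le_iff by blast

lemma good_cont: "good u \<Longrightarrow> continuous_on UNIV u"
  unfolding good_def using lipschitz_on_continuous_on by blast

lemma dense_exists: "\<exists>D::'a::{metric_space,second_countable_topology} set. countable D \<and> closure D = UNIV"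
proof -
  obtain D :: "'a set" where D: "countable D" "\<And>X. open X \<Longrightarrow> X \<noteq> {} \<Longrightarrow> \<exists>d \<in> D. d \<in> X"
    using countable_dense_setE by blast
  have "x \<in> closure D" for x
    unfolding closure_approachable
  proof (intro allI impI)
    fix e :: real assume "e > 0"
    then obtain d where "d \<in> D" "d \<in> ball x e" using D(2)[of "ball x e"] by auto
    then show "\<exists>y\<in>D. dist y x < e" by (auto simp: dist_commute)
  qed
  then show ?thesis using D(1) by blast
qed

lemma sup_dense:
  assumes "closure D = UNIV" "continuous_on UNIV u"
  shows "(\<forall>x. \<bar>u x\<bar> \<le> t) \<longleftrightarrow> (\<forall>x\<in>D. \<bar>u x\<bar> \<le> (t::real))"
proof safe
  assume H: "\<forall>x\<in>D. \<bar>u x\<bar> \<le> t"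
  fix x
  have "closed {x. \<bar>u x\<bar> \<le> t}"
    by (rule closed_Collect_le) (auto intro!: continuous_intros assms(2))
  then have "closure D \<subseteq> {x. \<bar>u x\<bar> \<le> t}" using H by (intro closure_minimal) auto
  then show "\<bar>u x\<bar> \<le> t" using assms(1) by auto
qed auto

lemma lip_dense:
  assumes "closure D = UNIV" "continuous_on UNIV u"
  shows "t-lipschitz_on UNIV u \<longleftrightarrow> 0 \<le> t \<and> (\<forall>x\<in>D. \<forall>y\<in>D. \<bar>u x - u y\<bar> \<le> t * dist x y)"
proof safe
  assume "t-lipschitz_on UNIV u" then show "0 \<le> t" using lipschitz_on_nonneg by blast
next
  fix x y assume "t-lipschitz_on UNIV u"
  then show "\<bar>u x - u y\<bar> \<le> t * dist x y" using lipschitz_onD[of t UNIV u x y] by (simp add: dist_real_def)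
next
  assume t: "0 \<le> t" and H: "\<forall>x\<in>D. \<forall>y\<in>D. \<bar>u x - u y\<bar> \<le> t * dist x y"
  have c1: "continuous_on UNIV (\<lambda>p::'a\<times>'a. u (fst p))"
    by (rule continuous_on_compose2[OF assms(2)]) (auto intro!: continuous_intros)
  have c2: "continuous_on UNIV (\<lambda>p::'a\<times>'a. u (snd p))"
    by (rule continuous_on_compose2[OF assms(2)]) (auto intro!: continuous_intros)
  have "closed {p::'a\<times>'a. \<bar>u (fst p) - u (snd p)\<bar> \<le> t * dist (fst p) (snd p)}"
    by (rule closed_Collect_le) (auto intro!: continuous_intros c1 c2)
  then have "closure (D \<times> D) \<subseteq> {p::'a\<times>'a. \<bar>u (fst p) - u (snd p)\<bar> \<le> t * dist (fst p) (snd p)}"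
    using H by (intro closure_minimal) auto
  then have sub: "UNIV \<subseteq> {p::'a\<times>'a. \<bar>u (fst p) - u (snd p)\<bar> \<le> t * dist (fst p) (snd p)}"
    using assms(1) by (simp add: closure_Times)
  have "(x,y) \<in> {p::'a\<times>'a. \<bar>u (fst p) - u (snd p)\<bar> \<le> t * dist (fst p) (snd p)}" for x y
    using subsetD[OF sub UNIV_I] .
  then have "\<bar>u x - u y\<bar> \<le> t * dist x y" for x y by simp
  then show "t-lipschitz_on UNIV u" using t by (intro lipschitz_onI) (auto simp: dist_real_def)
qed

definition Dfun :: "'x::euclidean_space measure \<Rightarrow> (nat \<Rightarrow> 'x) \<Rightarrow> nat \<Rightarrow> real" where
  "Dfun \<nu> zs m = (SUP u \<in> {u. 1-lipschitz_on UNIV u}. \<bar>(\<integral>x. u x \<partial>\<nu>) - emp_mean zs m u\<bar>)"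

lemma emp_mean_cmult: "emp_mean zs m (\<lambda>x. c * u x) = c * emp_mean zs m u"
  unfolding emp_mean_def by (simp add: sum_distrib_left)

lemma emp_mean_div: "emp_mean zs m (\<lambda>x. u x / c) = emp_mean zs m u / c"
  unfolding emp_mean_def by (simp add: sum_divide_distrib mult.commute)

lemma emp_mean_diff: "emp_mean zs m (\<lambda>x. u x - v x) = emp_mean zs m u - emp_mean zs m v"
  unfolding emp_mean_def by (simp add: sum_subtractf diff_divide_distrib)

lemma emp_mean_const: "m \<ge> 1 \<Longrightarrow> emp_mean zs m (\<lambda>x. c) = c"
  unfolding emp_mean_def by simp

lemma emp_mean_abs_le: "m \<ge> 1 \<Longrightarrow> (\<And>k. k < m \<Longrightarrow> \<bar>u (zs k)\<bar> \<le> a k) \<Longrightarrow> \<bar>emp_mean zs m u\<bar> \<le> emp_mean zs m (\<lambda>x. 0) + (\<Sum>k<m. a k) / real m"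
proof -
  assume m: "m \<ge> 1" and H: "\<And>k. k < m \<Longrightarrow> \<bar>u (zs k)\<bar> \<le> a k"
  have "\<bar>\<Sum>k<m. u (zs k)\<bar> \<le> (\<Sum>k<m. a k)"
    by (rule order_trans[OF sum_abs]) (auto intro: sum_mono H)
  then show ?thesis using m unfolding emp_mean_def by (simp add: divide_right_mono)
qed

lemma emp_mean_bound: "m \<ge> 1 \<Longrightarrow> (\<And>x. \<bar>u x\<bar> \<le> a) \<Longrightarrow> \<bar>emp_mean zs m u\<bar> \<le> a"
proof -
  assume m: "m \<ge> 1" and H: "\<And>x. \<bar>u x\<bar> \<le> a"
  have "\<bar>emp_mean zs m u\<bar> \<le> emp_mean zs m (\<lambda>x. 0) + (\<Sum>k<m. a) / real m"
    by (rule emp_mean_abs_le[OF m]) (rule H)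
  then show ?thesis using m unfolding emp_mean_def by simp
qed

context
  fixes \<nu> :: "'x::euclidean_space measure"
  assumes nu_prob: "prob_space \<nu>" and nu_sets: "sets \<nu> = sets borel"
begin

lemma meas_cont: "continuous_on UNIV u \<Longrightarrow> u \<in> borel_measurable \<nu>"
  using borel_measurable_continuous_onI measurable_cong_sets[OF nu_sets refl] by blast

lemma integrable_norm_from_exp:
  assumes a: "\<alpha> > 1" and b: "\<beta> > 0" and I: "integrable \<nu> (\<lambda>x. exp (\<beta> * norm x powr \<alpha>))"
  shows "integrable \<nu> (\<lambda>x. norm x)"
proof (rule Bochner_Integration.integrable_bound)
  interpret prob_space \<nu> by (rule nu_prob)
  show "integrable \<nu> (\<lambda>x. 1 + exp (\<beta> * norm x powr \<alpha>) / \<beta>)"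
    using I by auto
  show "(\<lambda>x. norm x) \<in> borel_measurable \<nu>" by (rule meas_cont) (auto intro: continuous_intros)
  show "AE x in \<nu>. norm (norm x) \<le> norm (1 + exp (\<beta> * norm x powr \<alpha>) / \<beta>)"
  proof (rule AE_I2)
    fix x :: 'x
    have e0: "exp (\<beta> * norm x powr \<alpha>) / \<beta> \<ge> 0" using b by simp
    have "norm x \<le> 1 + exp (\<beta> * norm x powr \<alpha>) / \<beta>"
    proof (cases "norm x \<le> 1")
      case True then show ?thesis using e0 by linarith
    next
      case False
      then have "norm x = norm x powr 1" by simp
      also have "\<dots> \<le> norm x powr \<alpha>" using False a by (intro powr_mono) auto
      also have "\<dots> = (\<beta> * norm x powr \<alpha>) / \<beta>" using b by simp
      also have "\<dots> \<le> exp (\<beta> * norm x powr \<alpha>) / \<beta>"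
      proof -
        have "\<beta> * norm x powr \<alpha> \<le> exp (\<beta> * norm x powr \<alpha>)"
          using exp_ge_add_one_self[of "\<beta> * norm x powr \<alpha>"] by linarith
        then show ?thesis using b by (intro divide_right_mono) auto
      qed
      finally show ?thesis by simp
    qed
    then show "norm (norm x) \<le> norm (1 + exp (\<beta> * norm x powr \<alpha>) / \<beta>)" using e0 by simp
  qed
qed

context
  assumes Inorm: "integrable \<nu> (\<lambda>x. norm x)"
begin

lemma lip_integrable: fixes u :: "'x \<Rightarrow> real" shows "L-lipschitz_on UNIV u \<Longrightarrow> integrable \<nu> u"
proof -
  assume L: "L-lipschitz_on UNIV u"
  interpret prob_space \<nu> by (rule nu_prob)
  show ?thesis
  proof (rule Bochner_Integration.integrable_bound)
    show "integrable \<nu> (\<lambda>x. \<bar>u 0\<bar> + L * norm x)" using Inorm by auto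
    show "u \<in> borel_measurable \<nu>" by (rule meas_cont) (rule lipschitz_on_continuous_on[OF L])
    show "AE x in \<nu>. norm (u x) \<le> norm (\<bar>u 0\<bar> + L * norm x)"
    proof (rule AE_I2)
      fix x :: 'x
      have "\<bar>u x - u 0\<bar> \<le> L * norm x" using lipschitz_onD[OF L, of x 0] by (simp add: dist_real_def dist_norm)
      moreover have "L \<ge> 0" using lipschitz_on_nonneg[OF L] .
      ultimately show "norm (u x) \<le> norm (\<bar>u 0\<bar> + L * norm x)" by simp
    qed
  qed
qed

lemma D_term_bound:
  fixes u :: "'x \<Rightarrow> real"
  assumes m: "m \<ge> 1" and u: "1-lipschitz_on UNIV u"
  shows "\<bar>(\<integral>x. u x \<partial>\<nu>) - emp_mean zs m u\<bar> \<le> (\<integral>x. norm x \<partial>\<nu>) + (\<Sum>k<m. norm (zs k)) / real m"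
proof -
  interpret prob_space \<nu> by (rule nu_prob)
  have iu: "integrable \<nu> u" by (rule lip_integrable[OF u])
  have d: "\<And>x. \<bar>u x - u 0\<bar> \<le> norm x" using lipschitz_onD[OF u, of _ 0] by (simp add: dist_real_def dist_norm)
  have "(\<integral>x. u x \<partial>\<nu>) - u 0 = (\<integral>x. u x - u 0 \<partial>\<nu>)" using iu by (simp add: prob_space)
  also have "\<bar>\<dots>\<bar> \<le> (\<integral>x. norm x \<partial>\<nu>)"
    by (rule integral_abs_bound_integral) (use iu Inorm d in auto)
  finally have 1: "\<bar>(\<integral>x. u x \<partial>\<nu>) - u 0\<bar> \<le> (\<integral>x. norm x \<partial>\<nu>)" .
  have "emp_mean zs m u - u 0 = emp_mean zs m (\<lambda>x. u x - u 0)" using m by (simp add: emp_mean_diff emp_mean_const)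
  also have "\<bar>\<dots>\<bar> \<le> emp_mean zs m (\<lambda>x. 0) + (\<Sum>k<m. norm (zs k)) / real m"
    by (rule emp_mean_abs_le[OF m]) (rule d)
  finally have 2: "\<bar>emp_mean zs m u - u 0\<bar> \<le> (\<Sum>k<m. norm (zs k)) / real m" by (simp add: emp_mean_def)
  show ?thesis using 1 2 by linarith
qed

lemma D_bdd: "m \<ge> 1 \<Longrightarrow> bdd_above ((\<lambda>u. \<bar>(\<integral>x. u x \<partial>\<nu>) - emp_mean zs m u\<bar>) ` {u. 1-lipschitz_on UNIV u})"
  unfolding bdd_above_def using D_term_bound by blast

lemma D_upper: fixes u :: "'x \<Rightarrow> real" shows "m \<ge> 1 \<Longrightarrow> 1-lipschitz_on UNIV u \<Longrightarrow> \<bar>(\<integral>x. u x \<partial>\<nu>) - emp_mean zs m u\<bar> \<le> Dfun \<nu> zs m"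
  unfolding Dfun_def by (rule cSUP_upper) (auto intro: D_bdd)

lemma D_scaled:
  fixes v :: "'x \<Rightarrow> real"
  assumes m: "m \<ge> 1" and c: "c > 0" and v: "c-lipschitz_on UNIV v"
  shows "\<bar>(\<integral>x. v x \<partial>\<nu>) - emp_mean zs m v\<bar> \<le> c * Dfun \<nu> zs m"
proof -
  have "(\<bar>1/c\<bar> * c)-lipschitz_on UNIV (\<lambda>x. (1/c) * v x)" by (rule lipschitz_on_cmult_real[OF v])
  then have l: "1-lipschitz_on UNIV (\<lambda>x. v x / c)" using c by simp
  have "\<bar>(\<integral>x. v x / c \<partial>\<nu>) - emp_mean zs m (\<lambda>x. v x / c)\<bar> \<le> Dfun \<nu> zs m" by (rule D_upper[OF m l])
  then have "\<bar>(\<integral>x. v x \<partial>\<nu>) - emp_mean zs m v\<bar> / c \<le> Dfun \<nu> zs m"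
    using c by (simp add: emp_mean_div diff_divide_distrib[symmetric])
  then show ?thesis using c by (simp add: divide_le_eq mult.commute)
qed

lemma lip_prod:
  fixes g h :: "'x \<Rightarrow> real"
  assumes a: "\<And>x. \<bar>g x\<bar> \<le> a" "\<And>x. \<bar>h x\<bar> \<le> a" and b: "b-lipschitz_on UNIV g" "b-lipschitz_on UNIV h"
  shows "(2*a*b)-lipschitz_on UNIV (\<lambda>x. g x * h x)"
proof (rule lipschitz_onI)
  have a0: "a \<ge> 0" using a(1)[of 0] by simp
  have b0: "b \<ge> 0" using lipschitz_on_nonneg[OF b(1)] .
  show "0 \<le> 2*a*b" using a0 b0 by simp
  fix x y :: 'x
  have gx: "\<bar>g x - g y\<bar> \<le> b * dist x y" using lipschitz_onD[OF b(1)] by (simp add: dist_real_def)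
  have hx: "\<bar>h x - h y\<bar> \<le> b * dist x y" using lipschitz_onD[OF b(2)] by (simp add: dist_real_def)
  have "g x * h x - g y * h y = g x * (h x - h y) + h y * (g x - g y)" by (simp add: algebra_simps)
  then have "\<bar>g x * h x - g y * h y\<bar> \<le> \<bar>g x\<bar> * \<bar>h x - h y\<bar> + \<bar>h y\<bar> * \<bar>g x - g y\<bar>"
    by (metis abs_mult abs_triangle_ineq)
  also have "\<dots> \<le> a * (b * dist x y) + a * (b * dist x y)"
    using a gx hx a0 by (intro add_mono mult_mono) auto
  finally show "dist (g x * h x) (g y * h y) \<le> 2*a*b * dist x y" by (simp add: dist_real_def)
qed

lemma cov_bound:
  fixes g h :: "'x \<Rightarrow> real"
  assumes m: "m \<ge> 1" and a: "\<And>x. \<bar>g x\<bar> \<le> a" "\<And>x. \<bar>h x\<bar> \<le> a" and b0: "b > 0"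
    and b: "b-lipschitz_on UNIV g" "b-lipschitz_on UNIV h"
  shows "\<bar>cov_nu \<nu> g h - emp_cov zs m g h\<bar> \<le> 4 * a * b * Dfun \<nu> zs m"
proof -
  interpret prob_space \<nu> by (rule nu_prob)
  have a0: "a \<ge> 0" using a(1)[of 0] by simp
  let ?D = "Dfun \<nu> zs m"
  have ig: "integrable \<nu> g" by (rule lip_integrable[OF b(1)])
  have ih: "integrable \<nu> h" by (rule lip_integrable[OF b(2)])
  have lp: "(2*a*b)-lipschitz_on UNIV (\<lambda>x. g x * h x)" by (rule lip_prod[OF a b])
  have 1: "\<bar>(\<integral>x. g x * h x \<partial>\<nu>) - emp_mean zs m (\<lambda>x. g x * h x)\<bar> \<le> 2*a*b*?D"
  proof (cases "a = 0")
    case True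
    then have "\<And>x. g x = 0" using a(1) by (metis abs_le_zero_iff)
    then show ?thesis using True m by (simp add: emp_mean_def)
  next
    case False
    then show ?thesis using D_scaled[OF m _ lp] a0 b0 by simp
  qed
  have 2: "\<bar>(\<integral>x. g x \<partial>\<nu>) - emp_mean zs m g\<bar> \<le> b * ?D" by (rule D_scaled[OF m b0 b(1)])
  have 3: "\<bar>(\<integral>x. h x \<partial>\<nu>) - emp_mean zs m h\<bar> \<le> b * ?D" by (rule D_scaled[OF m b0 b(2)])
  have ig1: "\<bar>(\<integral>x. g x \<partial>\<nu>)\<bar> \<le> a"
  proof -
    have "\<bar>(\<integral>x. g x \<partial>\<nu>)\<bar> \<le> (\<integral>x. a \<partial>\<nu>)"
      by (rule integral_abs_bound_integral) (use ig a in auto)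
    then show ?thesis by (simp add: prob_space)
  qed
  have ih1: "\<bar>emp_mean zs m h\<bar> \<le> a" by (rule emp_mean_bound[OF m a(2)])
  define p where "p = (\<integral>x. g x \<partial>\<nu>)"
  define q where "q = (\<integral>x. h x \<partial>\<nu>) - emp_mean zs m h"
  define r where "r = emp_mean zs m h"
  define s where "s = (\<integral>x. g x \<partial>\<nu>) - emp_mean zs m g"
  have eq: "cov_nu \<nu> g h - emp_cov zs m g h
     = ((\<integral>x. g x * h x \<partial>\<nu>) - emp_mean zs m (\<lambda>x. g x * h x)) - (p * q + r * s)"
    unfolding cov_nu_def emp_cov_def p_def q_def r_def s_def by (simp add: algebra_simps)
  have "\<bar>p * q\<bar> \<le> a * (b * ?D)"
    unfolding abs_mult using ig1 2 3 a0 unfolding p_def q_def by (intro mult_mono) auto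
  moreover have "\<bar>r * s\<bar> \<le> a * (b * ?D)"
    unfolding abs_mult using ih1 2 a0 unfolding r_def s_def by (intro mult_mono) auto
  ultimately show ?thesis unfolding eq using 1 by (simp add: abs_triangle_ineq4 abs_triangle_ineq)
qed

end
end

lemma phi_le1: "d \<ge> 1 \<Longrightarrow> 0 < a \<Longrightarrow> a \<le> 1 \<Longrightarrow> phi d \<alpha> a \<le> 1"
proof -
  assume d: "d \<ge> 1" and a: "0 < a" "a \<le> 1"
  consider "d = 1" | "d = 2" | "d \<ge> 3" using d by linarith
  then show ?thesis
  proof cases
    case 1 then show ?thesis using a by (simp add: phi_def power_le_one)
  next
    case 2
    have "ln 3 \<ge> (1::real)" using exp_le by (simp add: ln_ge_iff)
    moreover have "ln (2 + 1/a) \<ge> ln 3" using a by (subst ln_le_cancel_iff) (auto simp: field_simps)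
    ultimately have l: "ln (2 + 1/a) \<ge> 1" by linarith
    then have "a / ln (2 + 1/a) \<le> 1" using a by (simp add: divide_le_eq)
    moreover have "a / ln (2 + 1/a) \<ge> 0" using a l by simp
    ultimately show ?thesis using 2 a by (simp add: phi_def power_le_one)
  next
    case 3 then show ?thesis using a by (simp add: phi_def power_le_one)
  qed
qed

lemma phi_mono:
  assumes d: "d \<ge> 1" and al: "\<alpha> > 0" and a: "0 < a" "a \<le> b"
  shows "phi d \<alpha> a \<le> phi d \<alpha> b"
proof (cases "b > 1")
  case True
  show ?thesis
  proof (cases "a > 1")
    case True
    then show ?thesis using \<open>b > 1\<close> a al by (simp add: phi_def powr_mono2)
  next
    case False
    then have "phi d \<alpha> a \<le> 1" using phi_le1[OF d a(1)] by simp
    also have "1 \<le> b powr \<alpha>" using True al by (simp add: ge_one_powr_ge_zero)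
    finally show ?thesis using True False by (simp add: phi_def)
  qed
next
  case False
  then have a1: "\<not> a > 1" "\<not> b > 1" using a by auto
  consider "d = 1" | "d = 2" | "d \<ge> 3" using d by linarith
  then show ?thesis
  proof cases
    case 1 then show ?thesis using a a1 by (simp add: phi_def power_mono)
  next
    case 2
    have b0: "b > 0" using a by simp
    have la: "ln (2 + 1/a) \<ge> ln (2 + 1/b)" using a b0
      by (subst ln_le_cancel_iff) (auto simp: field_simps intro: add_pos_pos)
    have lb: "ln (2 + 1/b) > 0" using b0 by (simp add: ln_gt_zero add_pos_pos)
    have "a / ln (2 + 1/a) \<le> b / ln (2 + 1/b)"
      using a la lb by (intro frac_le) auto
    moreover have "0 \<le> a / ln (2 + 1/a)" using a la lb by simp
    ultimately show ?thesis using 2 a1 by (simp add: phi_def power_mono)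
  next
    case 3 then show ?thesis using a a1 by (simp add: phi_def power_mono)
  qed
qed

context
  fixes \<nu> :: "'x::euclidean_space measure"
  assumes nu_prob: "prob_space \<nu>" and nu_sets: "sets \<nu> = sets borel"
  and Inorm: "integrable \<nu> (\<lambda>x. norm x)"
begin

lemma emp_mean_cong: "(\<And>k. k < m \<Longrightarrow> zs k = zs' k) \<Longrightarrow> emp_mean zs m u = emp_mean zs' m u"
  unfolding emp_mean_def by simp

lemma Dfun_cong: assumes "\<And>k. k < m \<Longrightarrow> zs k = zs' k" shows "Dfun \<nu> zs m = Dfun \<nu> zs' m"
  unfolding Dfun_def using emp_mean_cong[of m zs zs', OF assms] by simp

lemma Dfun_borel:
  assumes m: "m \<ge> 1"
  shows "(\<lambda>z::nat \<Rightarrow> 'x. Dfun \<nu> z m) \<in> borel_measurable borel"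
proof (subst borel_measurable_iff_greater, intro allI)
  fix a :: real
  let ?U = "{u::'x \<Rightarrow> real. 1-lipschitz_on UNIV u}"
  let ?F = "\<lambda>u z. \<bar>(\<integral>x. u x \<partial>\<nu>) - emp_mean z m u\<bar>"
  have ne: "?U \<noteq> {}" using lipschitz_on_constant[of UNIV 0] lipschitz_on_mono[of 0 UNIV "\<lambda>x::'x. 0::real" UNIV 1] by auto
  have eq: "{z \<in> space borel. a < Dfun \<nu> z m} = (\<Union>u\<in>?U. {z. a < ?F u z})"
    unfolding Dfun_def using less_cSUP_iff[OF ne D_bdd[OF nu_prob nu_sets Inorm m]] by auto
  have "open {z. a < ?F u z}" if u: "u \<in> ?U" for u
  proof (rule open_Collect_less)
    have cu: "continuous_on UNIV u" using u lipschitz_on_continuous_on by blast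
    have ck: "continuous_on UNIV (\<lambda>z::nat\<Rightarrow>'x. u (z k))" for k
      by (rule continuous_on_compose2[OF cu continuous_on_product_coordinates]) auto
    show "continuous_on UNIV (?F u)"
      unfolding emp_mean_def by (intro continuous_intros ck) (use m in auto)
  qed auto
  then have "open (\<Union>u\<in>?U. {z. a < ?F u z})" by (intro open_UN) auto
  then show "{z \<in> space borel. a < Dfun \<nu> z m} \<in> sets borel" unfolding eq by (rule borel_open)
qed

lemma Dfun_meas:
  assumes m: "m \<ge> 1"
  shows "(\<lambda>zs. Dfun \<nu> zs m) \<in> borel_measurable (PiM {..<m} (\<lambda>_. \<nu>))"
proof -
  let ?R = "\<lambda>zs::nat \<Rightarrow> 'x. (\<lambda>k. if k < m then zs k else 0)"
  have R: "?R \<in> measurable (PiM {..<m} (\<lambda>_. \<nu>)) (PiM UNIV (\<lambda>_::nat. borel::'x measure))"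
  proof (rule measurable_PiM_single')
    fix k :: nat
    show "(\<lambda>zs. if k < m then zs k else 0) \<in> measurable (PiM {..<m} (\<lambda>_. \<nu>)) borel"
    proof (cases "k < m")
      case True
      have 1: "(\<lambda>zs. zs k) \<in> measurable (PiM {..<m} (\<lambda>_. \<nu>)) \<nu>"
        using True by (intro measurable_component_singleton) auto
      show ?thesis using True 1 unfolding measurable_cong_sets[OF refl nu_sets] by simp
    qed simp
  qed auto
  have G: "(\<lambda>z::nat \<Rightarrow> 'x. Dfun \<nu> z m) \<in> borel_measurable (PiM UNIV (\<lambda>_::nat. borel::'x measure))"
    using Dfun_borel[OF m] measurable_cong_sets[OF sets_PiM_equal_borel refl] by blast
  have "(\<lambda>zs. Dfun \<nu> (?R zs) m) \<in> borel_measurable (PiM {..<m} (\<lambda>_. \<nu>))"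
    using measurable_comp[OF R G] by (simp add: comp_def)
  moreover have "Dfun \<nu> (?R zs) m = Dfun \<nu> zs m" for zs by (rule Dfun_cong) simp
  ultimately show ?thesis by simp
qed

end

lemma (in prob_space) indep_sets_reindex:
  assumes inj: "inj_on f I" and ind: "indep_sets F (f ` I)"
  shows "indep_sets (\<lambda>i. F (f i)) I"
  unfolding indep_sets_def
proof (intro conjI)
  show "\<forall>i\<in>I. F (f i) \<subseteq> events" using ind unfolding indep_sets_def by auto
next
  show "\<forall>J\<subseteq>I. J \<noteq> {} \<longrightarrow> finite J \<longrightarrow> (\<forall>A\<in>Pi J (\<lambda>i. F (f i)). prob (\<Inter>j\<in>J. A j) = (\<Prod>j\<in>J. prob (A j)))"
  proof (intro allI impI ballI)
  fix J A assume J: "J \<subseteq> I" "J \<noteq> {}" "finite J" and A: "A \<in> Pi J (\<lambda>i. F (f i))"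
  define A' where "A' = (\<lambda>j. A (the_inv_into J f j))"
  have injJ: "inj_on f J" using inj J(1) by (rule inj_on_subset)
  have A'f: "\<And>j. j\<in>J \<Longrightarrow> A' (f j) = A j" using the_inv_into_f_f[OF injJ] unfolding A'_def by simp
  have "prob (\<Inter>j\<in>f`J. A' j) = (\<Prod>j\<in>f`J. prob (A' j))"
    by (rule indep_setsD[OF ind]) (use J A A'f in auto)
  moreover have "(\<Inter>j\<in>f`J. A' j) = (\<Inter>j\<in>J. A j)" using A'f by auto
  moreover have "(\<Prod>j\<in>f`J. prob (A' j)) = (\<Prod>j\<in>J. prob (A j))"
  proof -
    have "(\<Prod>j\<in>f`J. prob (A' j)) = (\<Prod>x\<in>J. prob (A' (f x)))"
      using prod.reindex[OF injJ, of "\<lambda>j. prob (A' j)"] by simp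
    also have "\<dots> = (\<Prod>j\<in>J. prob (A j))" by (rule prod.cong) (auto simp: A'f)
    finally show ?thesis .
  qed
  ultimately show "prob (\<Inter>j\<in>J. A j) = (\<Prod>j\<in>J. prob (A j))" by simp
  qed
qed

lemma indep_batch:
  fixes P :: "'w measure" and \<nu> :: "'x::euclidean_space measure" and Zs :: "nat \<Rightarrow> nat \<Rightarrow> 'w \<Rightarrow> 'x"
  assumes P: "prob_space P" and nu_sets: "sets \<nu> = sets borel"
    and Zs_indep: "prob_space.indep_vars P (\<lambda>_. borel) (\<lambda>(m, k). Zs m k) ({1..} \<times> UNIV)"
    and Zs_law: "\<And>m k. m \<ge> 1 \<Longrightarrow> distr P borel (Zs m k) = \<nu>"
    and n: "n \<ge> 2" and m: "m \<ge> 1"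
    and A: "A \<in> sets (batch_sigma P Zs (n - 1))" and Q: "Q \<in> sets (PiM {..<m} (\<lambda>_. \<nu>))"
  shows "measure P (A \<inter> {\<omega>\<in>space P. (\<lambda>k\<in>{..<m}. Zs n k \<omega>) \<in> Q})
       = measure P A * measure (PiM {..<m} (\<lambda>_. \<nu>)) Q"
proof -
  interpret prob_space P by (rule P)
  define E where "E = (\<lambda>i::nat\<times>nat. {Zs (fst i) (snd i) -` B \<inter> space P | B. B \<in> sets (borel::'x measure)})"
  have ind0: "indep_sets E ({1..} \<times> UNIV)"
    using Zs_indep unfolding indep_vars_def2 E_def by (simp add: case_prod_beta)
  have rv: "\<And>i k. i \<ge> 1 \<Longrightarrow> random_variable borel (Zs i k)"
    using Zs_indep unfolding indep_vars_def2 by auto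
  have rvnu: "\<And>i k. i \<ge> 1 \<Longrightarrow> random_variable \<nu> (Zs i k)"
    using rv unfolding measurable_cong_sets[OF refl nu_sets] by auto
  define I where "I = (\<lambda>j::nat. if j = 0 then {1..n-1} \<times> (UNIV::nat set) else {n} \<times> UNIV)"
  have "indep_sets E (\<Union>j\<in>{0,1}. I j)"
    by (rule indep_sets_mono_index[OF _ ind0]) (use n in \<open>auto simp: I_def\<close>)
  moreover have "\<And>i j. j \<in> {0,1} \<Longrightarrow> i \<in> I j \<Longrightarrow> Int_stable (E i)"
    unfolding Int_stable_def E_def
  proof (clarify)
    fix i j B B' assume "B \<in> sets (borel::'x measure)" "B' \<in> sets (borel::'x measure)"
    then show "\<exists>C. Zs (fst i) (snd i) -` B \<inter> space P \<inter> (Zs (fst i) (snd i) -` B' \<inter> space P) = Zs (fst i) (snd i) -` C \<inter> space P \<and> C \<in> sets borel"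
      by (intro exI[of _ "B \<inter> B'"]) auto
  qed
  moreover have "disjoint_family_on I {0,1}"
    unfolding disjoint_family_on_def I_def using n by auto
  ultimately have ind2: "indep_sets (\<lambda>j. sigma_sets (space P) (\<Union>i\<in>I j. E i)) {0,1}"
    by (rule indep_sets_collect_sigma)
  define G0 where "G0 = {Zs i k -` B \<inter> space P | i k B. 1 \<le> i \<and> i \<le> n - 1 \<and> B \<in> sets (borel::'x measure)}"
  have G0eq: "G0 = (\<Union>i\<in>I 0. E i)"
  proof
    show "G0 \<subseteq> (\<Union>i\<in>I 0. E i)"
    proof
      fix S assume "S \<in> G0"
      then obtain i k B where "S = Zs i k -` B \<inter> space P" "1 \<le> i" "i \<le> n - 1" "B \<in> sets borel"
        unfolding G0_def by blast
      then show "S \<in> (\<Union>i\<in>I 0. E i)" unfolding I_def E_def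
        by (intro UN_I[of "(i,k)"]) auto
    qed
    show "(\<Union>i\<in>I 0. E i) \<subseteq> G0"
    proof
      fix S assume "S \<in> (\<Union>i\<in>I 0. E i)"
      then obtain i k B where "S = Zs i k -` B \<inter> space P" "1 \<le> i" "i \<le> n - 1" "B \<in> sets borel"
        unfolding I_def E_def by auto
      then show "S \<in> G0" unfolding G0_def by blast
    qed
  qed
  have "sets (batch_sigma P Zs (n - 1)) = sigma_sets (space P) G0"
    unfolding batch_sigma_def G0_def by (rule sets_measure_of) auto
  then have A0: "A \<in> sigma_sets (space P) (\<Union>i\<in>I 0. E i)" using A G0eq by simp
  define G1 where "G1 = (\<Union>i\<in>I 1. E i)"
  define X where "X = (\<lambda>\<omega>. \<lambda>k\<in>{..<m}. Zs n k \<omega>)"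
  have G1P: "G1 \<subseteq> Pow (space P)" unfolding G1_def E_def by auto
  have sp: "space (sigma (space P) G1) = space P" using G1P by simp
  have sg: "sets (sigma (space P) G1) = sigma_sets (space P) G1" using G1P by simp
  have "Zs n k \<in> measurable (sigma (space P) G1) \<nu>" for k
  proof (rule measurableI)
    fix x assume "x \<in> space (sigma (space P) G1)" then show "Zs n k x \<in> space \<nu>"
      using sets_eq_imp_space_eq[OF nu_sets] by simp
  next
    fix B assume "B \<in> sets \<nu>"
    then have "Zs n k -` B \<inter> space P \<in> G1" unfolding G1_def I_def E_def using nu_sets by force
    then show "Zs n k -` B \<inter> space (sigma (space P) G1) \<in> sets (sigma (space P) G1)"
      unfolding sp sg by auto
  qed
  then have Xm: "X \<in> measurable (sigma (space P) G1) (PiM {..<m} (\<lambda>_. \<nu>))"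
    unfolding X_def by (intro measurable_restrict) auto
  have E1: "{\<omega>\<in>space P. X \<omega> \<in> Q} \<in> sigma_sets (space P) (\<Union>i\<in>I 1. E i)"
  proof -
    have "X -` Q \<inter> space (sigma (space P) G1) \<in> sets (sigma (space P) G1)"
      using measurable_sets[OF Xm Q] .
    moreover have "{\<omega>\<in>space P. X \<omega> \<in> Q} = X -` Q \<inter> space (sigma (space P) G1)" unfolding sp by auto
    ultimately have "{\<omega>\<in>space P. X \<omega> \<in> Q} \<in> sigma_sets (space P) G1" using sg by simp
    then show ?thesis unfolding G1_def .
  qed
  have "prob (\<Inter>j\<in>{0::nat,1}. (\<lambda>j. if j = 0 then A else {\<omega>\<in>space P. X \<omega> \<in> Q}) j)
      = (\<Prod>j\<in>{0::nat,1}. prob ((\<lambda>j. if j = 0 then A else {\<omega>\<in>space P. X \<omega> \<in> Q}) j))"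
    by (rule indep_setsD[OF ind2]) (use A0 E1 in auto)
  then have 1: "prob (A \<inter> {\<omega>\<in>space P. X \<omega> \<in> Q}) = prob A * prob {\<omega>\<in>space P. X \<omega> \<in> Q}"
    by (simp add: Int_commute)
  have indk: "indep_vars (\<lambda>_. \<nu>) (\<lambda>k. Zs n k) {..<m}"
    unfolding indep_vars_def2
  proof (intro conjI)
    show "\<forall>i\<in>{..<m}. random_variable \<nu> (Zs n i)" using rvnu n by auto
    have "indep_sets E ((\<lambda>k. (n,k)) ` {..<m})"
      by (rule indep_sets_mono_index[OF _ ind0]) (use n in auto)
    then have "indep_sets (\<lambda>k. E (n,k)) {..<m}"
      by (rule indep_sets_reindex[rotated]) (auto intro: inj_onI)
    then show "indep_sets (\<lambda>i. {Zs n i -` A \<inter> space P |A. A \<in> sets \<nu>}) {..<m}"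
      unfolding E_def nu_sets by simp
  qed
  have "0 \<in> {..<m}" using m by simp
  then have mne: "{..<m} \<noteq> {}" by blast
  have "distr P (PiM {..<m} (\<lambda>_. \<nu>)) X = PiM {..<m} (\<lambda>k. distr P \<nu> (Zs n k))"
    unfolding X_def using indep_vars_iff_distr_eq_PiM[where I="{..<m}" and M'="\<lambda>_. \<nu>" and X="\<lambda>k. Zs n k", OF mne] indk rvnu n
    by auto
  also have "\<dots> = PiM {..<m} (\<lambda>_. \<nu>)"
  proof (rule PiM_cong)
    fix k assume "k \<in> {..<m}"
    have "distr P \<nu> (Zs n k) = distr P borel (Zs n k)" by (rule distr_cong) (auto simp: nu_sets)
    then show "distr P \<nu> (Zs n k) = \<nu>" using Zs_law n by simp
  qed simp
  finally have D: "distr P (PiM {..<m} (\<lambda>_. \<nu>)) X = PiM {..<m} (\<lambda>_. \<nu>)" .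
  have XP: "X \<in> measurable P (PiM {..<m} (\<lambda>_. \<nu>))"
    unfolding X_def using rvnu n by (intro measurable_restrict) auto
  have "prob {\<omega>\<in>space P. X \<omega> \<in> Q} = measure (distr P (PiM {..<m} (\<lambda>_. \<nu>)) X) Q"
    by (subst measure_distr[OF XP]) (use Q in \<open>auto simp: vimage_def Int_def conj_commute\<close>)
  then have 2: "prob {\<omega>\<in>space P. X \<omega> \<in> Q} = measure (PiM {..<m} (\<lambda>_. \<nu>)) Q" using D by simp
  show ?thesis using 1 2 unfolding X_def by simp
qed

lemma batch_sets: "sets (batch_sigma P Zs m) = sigma_sets (space P) {Zs i k -` A \<inter> space P | i k A. 1 \<le> i \<and> i \<le> m \<and> A \<in> sets borel}"
  unfolding batch_sigma_def by (rule sets_measure_of) auto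

lemma batch_space: "space (batch_sigma P Zs m) = space P"
  unfolding batch_sigma_def by (rule space_measure_of) auto

lemma batch_mono: assumes mm: "m \<le> m'" shows "subalgebra (batch_sigma P Zs m') (batch_sigma P Zs m)"
  unfolding subalgebra_def batch_space batch_sets
proof (intro conjI refl sigma_sets_mono' subsetI)
  fix S assume "S \<in> {Zs i k -` A \<inter> space P | i k A. 1 \<le> i \<and> i \<le> m \<and> A \<in> sets (borel::'b measure)}"
  then obtain i k A where S: "S = Zs i k -` A \<inter> space P" "1 \<le> i" "i \<le> m" "A \<in> sets (borel::'b measure)" by blast
  then have "i \<le> m'" using mm by simp
  then show "S \<in> {Zs i k -` A \<inter> space P | i k A. 1 \<le> i \<and> i \<le> m' \<and> A \<in> sets (borel::'b measure)}"
    using S by blast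
qed

lemma pred_le_helper: "f \<in> borel_measurable M \<Longrightarrow> Measurable.pred M (\<lambda>x. f x \<le> (t::real))"
  unfolding pred_def borel_measurable_iff_le by (erule allE)

theorem lemma4:
  fixes P :: "'w measure"
    and \<nu> :: "'x::euclidean_space measure"
    and Pset :: "'p::euclidean_space set"
    and f :: "'p \<Rightarrow> 'x \<Rightarrow> real"
    and Zs :: "nat \<Rightarrow> nat \<Rightarrow> 'w \<Rightarrow> 'x"
    and M :: "nat \<Rightarrow> 'w \<Rightarrow> nat"
    and mu :: "nat \<Rightarrow> 'w \<Rightarrow> 'p"
    and \<alpha> \<beta> c C \<epsilon> :: real
    and n :: nat
  defines "g \<equiv> gmu \<nu> f"
  defines "gbar \<equiv> (\<lambda>m \<omega>. gram_schmidt (cov_nu \<nu>) (\<lambda>i. g (mu i \<omega>)) m)"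
  defines "Kinf \<equiv> (SUP \<mu>\<in>Pset. supnorm (g \<mu>))"
  defines "KLip \<equiv> (SUP \<mu>\<in>Pset. lipconst (g \<mu>))"
  assumes P: "prob_space P"
    and nu_sets: "sets \<nu> = sets borel" and nu_prob: "prob_space \<nu>"
    \<comment> \<open>i.i.d. samples of law nu\<close>
    and Zs_indep: "prob_space.indep_vars P (\<lambda>_. borel) (\<lambda>(m, k). Zs m k) ({1..} \<times> UNIV)"
    and Zs_law: "\<And>m k. m \<ge> 1 \<Longrightarrow> distr P borel (Zs m k) = \<nu>"
    \<comment> \<open>Assumption (A)\<close>
    and A_alpha: "\<alpha> > 1" and A_beta: "\<beta> > 0"
    and A_int: "integrable \<nu> (\<lambda>x. exp (\<beta> * norm x powr \<alpha>))"
    \<comment> \<open>Fournier--Guillin constants\<close>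
    and c_pos: "c > 0" and C_pos: "C > 0"
    and FG: "\<And>(Mk::nat) \<kappa>. Mk \<ge> 1 \<Longrightarrow> \<kappa> > 0 \<Longrightarrow>
       measure (PiM {..<Mk} (\<lambda>_. \<nu>))
         {zs \<in> space (PiM {..<Mk} (\<lambda>_. \<nu>)).
            (SUP u \<in> {u. 1-lipschitz_on UNIV u}. \<bar>(\<integral>x. u x \<partial>\<nu>) - emp_mean zs Mk u\<bar>) \<ge> \<kappa>}
       \<le> C * exp (- c * real Mk * phi DIM('x) \<alpha> \<kappa>)"
    \<comment> \<open>the parametrized functions\<close>
    and f_cont: "\<And>\<mu>. \<mu> \<in> Pset \<Longrightarrow> continuous_on UNIV (f \<mu>)"
    and f_L2: "\<And>\<mu>. \<mu> \<in> Pset \<Longrightarrow> integrable \<nu> (\<lambda>x. (f \<mu> x)\<^sup>2)"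
    \<comment> \<open>Assumption (B)\<close>
    and B1: "l2_compact \<nu> (g ` Pset)" "bdd_above ((\<lambda>\<mu>. l2norm \<nu> (g \<mu>)) ` Pset)"
    and B2: "\<And>\<mu>. \<mu> \<in> Pset \<Longrightarrow> \<exists>L. L-lipschitz_on UNIV (g \<mu>)"
            "bdd_above ((\<lambda>\<mu>. lipconst (g \<mu>)) ` Pset)"
    and B3: "\<And>\<mu>. \<mu> \<in> Pset \<Longrightarrow> bdd_above (range (\<lambda>x. \<bar>g \<mu> x\<bar>))"
            "bdd_above ((\<lambda>\<mu>. supnorm (g \<mu>)) ` Pset)"
    and B4: "\<And>k. kolmogorov_width \<nu> (g ` Pset) k > 0"
    \<comment> \<open>sample sizes\<close>
    and n2: "n \<ge> 2"
    and M_pos: "\<And>m \<omega>. 1 \<le> m \<Longrightarrow> m \<le> n \<Longrightarrow> \<omega> \<in> space P \<Longrightarrow> M m \<omega> \<ge> 1"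
    and M_meas: "M n \<in> measurable (batch_sigma P Zs (n - 1)) (count_space UNIV)"
    \<comment> \<open>MC-greedy algorithm (steps 1, ..., n-1)\<close>
    and mu_in: "\<And>m \<omega>. 1 \<le> m \<Longrightarrow> m < n \<Longrightarrow> \<omega> \<in> space P \<Longrightarrow> mu m \<omega> \<in> Pset"
    and mu_argmax: "\<And>m \<omega> \<mu>. 1 \<le> m \<Longrightarrow> m < n \<Longrightarrow> \<omega> \<in> space P \<Longrightarrow> \<mu> \<in> Pset \<Longrightarrow>
       greedy_obj \<nu> f (\<lambda>k. Zs m k \<omega>) (M m \<omega>) (\<lambda>i. mu i \<omega>) m \<mu>
         \<le> greedy_obj \<nu> f (\<lambda>k. Zs m k \<omega>) (M m \<omega>) (\<lambda>i. mu i \<omega>) m (mu m \<omega>)"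
    and mu_indep: "\<And>m \<omega> lam. 1 \<le> m \<Longrightarrow> m < n \<Longrightarrow> \<omega> \<in> space P \<Longrightarrow>
       l2norm \<nu> (\<lambda>x. g (mu m \<omega>) x - (\<Sum>i\<in>{1..<m}. lam i * g (mu i \<omega>) x)) \<noteq> 0"
    and gbar_meas: "\<And>m x. 1 \<le> m \<Longrightarrow> m < n \<Longrightarrow>
       (\<lambda>\<omega>. gbar m \<omega> x) \<in> borel_measurable (batch_sigma P Zs m)"
    and eps: "\<epsilon> > 0"
  shows "AE \<omega> in P.
     real_cond_exp P (batch_sigma P Zs (n - 1))
       (indicator {\<omega>' \<in> space P.
          (SUP gh \<in> (g ` Pset \<union> (\<lambda>m. gbar m \<omega>') ` {1..<n}) \<times> (g ` Pset \<union> (\<lambda>m. gbar m \<omega>') ` {1..<n}).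
             \<bar>cov_nu \<nu> (fst gh) (snd gh) - emp_cov (\<lambda>k. Zs n k \<omega>') (M n \<omega>') (fst gh) (snd gh)\<bar>)
          \<ge> \<epsilon>}) \<omega>
     \<le> C * exp (- c * real (M n \<omega>) *
          phi DIM('x) \<alpha> (\<epsilon> / (6 * Max (insert Kinf ((\<lambda>m. supnorm (gbar m \<omega>)) ` {1..<n}))
                               * Max (insert KLip ((\<lambda>m. lipconst (gbar m \<omega>)) ` {1..<n})))))"
proof -
  interpret prob_space P by (rule P)
  interpret nu: prob_space \<nu> by (rule nu_prob)
  define F where "F = batch_sigma P Zs (n - 1)"
  define K1 where "K1 = (\<lambda>\<omega>. Max (insert Kinf ((\<lambda>m. supnorm (gbar m \<omega>)) ` {1..<n})))"
  define K2 where "K2 = (\<lambda>\<omega>. Max (insert KLip ((\<lambda>m. lipconst (gbar m \<omega>)) ` {1..<n})))"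
  define fam where "fam = (\<lambda>\<omega>'. g ` Pset \<union> (\<lambda>m. gbar m \<omega>') ` {1..<n})"
  define S where "S = {\<omega>' \<in> space P.
          (SUP gh \<in> fam \<omega>' \<times> fam \<omega>'.
             \<bar>cov_nu \<nu> (fst gh) (snd gh) - emp_cov (\<lambda>k. Zs n k \<omega>') (M n \<omega>') (fst gh) (snd gh)\<bar>)
          \<ge> \<epsilon>}"
  define h where "h = (\<lambda>\<omega>. C * exp (- c * real (M n \<omega>) * phi DIM('x) \<alpha> (\<epsilon> / (6 * K1 \<omega> * K2 \<omega>))))"
  have goal_eq: "?thesis \<longleftrightarrow> (AE \<omega> in P. real_cond_exp P F (indicator S) \<omega> \<le> h \<omega>)"
    unfolding F_def S_def h_def K1_def K2_def fam_def by simp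
  have rv: "\<And>i k. i \<ge> 1 \<Longrightarrow> random_variable borel (Zs i k)"
    using Zs_indep unfolding indep_vars_def2 by auto
  define G0 where "G0 = {Zs i k -` B \<inter> space P | i k B. 1 \<le> i \<and> i \<le> n - 1 \<and> B \<in> sets (borel::'x measure)}"
  have G0P: "G0 \<subseteq> sets P"
  proof
    fix S assume "S \<in> G0"
    then obtain i k B where "S = Zs i k -` B \<inter> space P" "1 \<le> i" "B \<in> sets borel" unfolding G0_def by blast
    then show "S \<in> sets P" using measurable_sets[OF rv] by auto
  qed
  have sF: "sets F = sigma_sets (space P) G0"
    unfolding F_def batch_sigma_def G0_def by (rule sets_measure_of) auto
  have spF: "space F = space P"
    unfolding F_def batch_sigma_def G0_def by (rule space_measure_of) auto
  have subalg: "subalgebra P F"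
    unfolding subalgebra_def using sF spF G0P by (simp add: sets.sigma_sets_subset)
  have sfs: "sigma_finite_subalgebra P F"
    by (rule finite_measure_subalgebra_is_sigma_finite) (simp add: finite_measure_subalgebra_def finite_measure_subalgebra_axioms_def subalg finite_measure_axioms)
  have FP: "\<And>A. A \<in> sets F \<Longrightarrow> A \<in> sets P" using subalg unfolding subalgebra_def by auto
  have Inorm: "integrable \<nu> (\<lambda>x. norm x)"
    by (rule integrable_norm_from_exp[OF nu_prob nu_sets A_alpha A_beta A_int])
  obtain xs :: "nat \<Rightarrow> 'x" where xs: "closure (range xs) = UNIV"
  proof -
    obtain Dn :: "'x set" where Dn: "countable Dn" "closure Dn = UNIV" using dense_exists by blast
    then have "Dn \<noteq> {}" by auto
    then show ?thesis using Dn that[of "from_nat_into Dn"] by simp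
  qed
  have good_g: "\<And>\<mu>. \<mu> \<in> Pset \<Longrightarrow> good (g \<mu>)"
    unfolding good_def by (intro conjI B3(1) B2(1))
  have good_gbar: "\<And>m \<omega>. 1 \<le> m \<Longrightarrow> m < n \<Longrightarrow> \<omega> \<in> space P \<Longrightarrow> good (gbar m \<omega>)"
    unfolding gbar_def by (rule good_gram_schmidt) (auto intro!: good_g mu_in)
  have Kinf_ge: "\<And>\<mu>. \<mu> \<in> Pset \<Longrightarrow> supnorm (g \<mu>) \<le> Kinf"
    unfolding Kinf_def by (rule cSUP_upper) (use B3(2) in auto)
  have KLip_ge: "\<And>\<mu>. \<mu> \<in> Pset \<Longrightarrow> lipconst (g \<mu>) \<le> KLip"
    unfolding KLip_def by (rule cSUP_upper) (use B2(2) in auto)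
  have K1_ge: "Kinf \<le> K1 \<omega>" "\<And>m. m \<in> {1..<n} \<Longrightarrow> supnorm (gbar m \<omega>) \<le> K1 \<omega>" for \<omega>
    unfolding K1_def by (rule Max_ge; simp)+
  have K2_ge: "KLip \<le> K2 \<omega>" "\<And>m. m \<in> {1..<n} \<Longrightarrow> lipconst (gbar m \<omega>) \<le> K2 \<omega>" for \<omega>
    unfolding K2_def by (rule Max_ge; simp)+
  have fam_good: "\<And>u. \<omega> \<in> space P \<Longrightarrow> u \<in> fam \<omega> \<Longrightarrow> good u \<and> (\<forall>x. \<bar>u x\<bar> \<le> K1 \<omega>) \<and> (K2 \<omega>)-lipschitz_on UNIV u" for \<omega>
  proof -
    fix u assume \<omega>: "\<omega> \<in> space P" and u: "u \<in> fam \<omega>"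
    then consider (a) \<mu> where "\<mu> \<in> Pset" "u = g \<mu>" | (b) m where "m \<in> {1..<n}" "u = gbar m \<omega>"
      unfolding fam_def by auto
    then show "good u \<and> (\<forall>x. \<bar>u x\<bar> \<le> K1 \<omega>) \<and> (K2 \<omega>)-lipschitz_on UNIV u"
    proof cases
      case a
      have gu: "good (g \<mu>)" using a good_g by simp
      have "\<bar>g \<mu> x\<bar> \<le> K1 \<omega>" for x
        using abs_le_supnorm[OF gu, of x] Kinf_ge[OF a(1)] K1_ge(1)[of \<omega>] by linarith
      moreover have "lipconst (g \<mu>) \<le> K2 \<omega>" using KLip_ge[OF a(1)] K2_ge(1)[of \<omega>] by linarith
      then have "(K2 \<omega>)-lipschitz_on UNIV (g \<mu>)" using lipconst_le_iff[OF gu] by blast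
      ultimately show ?thesis unfolding a(2) using gu by blast
    next
      case b
      have gu: "good (gbar m \<omega>)" using b good_gbar \<omega> by auto
      have "\<bar>gbar m \<omega> x\<bar> \<le> K1 \<omega>" for x
        using abs_le_supnorm[OF gu, of x] K1_ge(2)[OF b(1), of \<omega>] by linarith
      moreover have "lipconst (gbar m \<omega>) \<le> K2 \<omega>" using K2_ge(2)[OF b(1), of \<omega>] by linarith
      then have "(K2 \<omega>)-lipschitz_on UNIV (gbar m \<omega>)" using lipconst_le_iff[OF gu] by blast
      ultimately show ?thesis unfolding b(2) using gu by blast
    qed
  qed
  have n1: "1 < n" using n2 by simp
  have mu1: "\<And>\<omega>. \<omega> \<in> space P \<Longrightarrow> mu 1 \<omega> \<in> Pset" using mu_in n1 by auto
  have l2ne: "\<And>\<omega>. \<omega> \<in> space P \<Longrightarrow> l2norm \<nu> (g (mu 1 \<omega>)) \<noteq> 0"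
    using mu_indep[of 1] n1 by simp
  have const_l2: "l2norm \<nu> (\<lambda>x. a) = 0" for a :: real
    unfolding l2norm_def cov_nu_def by (simp add: nu.prob_space)
  have K1_pos: "K1 \<omega> > 0" if \<omega>: "\<omega> \<in> space P" for \<omega>
  proof -
    have gu: "good (g (mu 1 \<omega>))" using good_g mu1 \<omega> by blast
    have "supnorm (g (mu 1 \<omega>)) > 0"
    proof (rule ccontr)
      assume "\<not> supnorm (g (mu 1 \<omega>)) > 0"
      then have "\<forall>x. \<bar>g (mu 1 \<omega>) x\<bar> \<le> 0" using supnorm_le_iff[OF gu, of 0] by simp
      then have "g (mu 1 \<omega>) = (\<lambda>x. 0)" by (intro ext) simp
      then show False using l2ne[OF \<omega>] const_l2 by simp
    qed
    then show ?thesis using Kinf_ge[OF mu1[OF \<omega>]] K1_ge(1)[of \<omega>] by linarith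
  qed
  have K2_pos: "K2 \<omega> > 0" if \<omega>: "\<omega> \<in> space P" for \<omega>
  proof -
    have gu: "good (g (mu 1 \<omega>))" using good_g mu1 \<omega> by blast
    have "lipconst (g (mu 1 \<omega>)) > 0"
    proof (rule ccontr)
      assume "\<not> lipconst (g (mu 1 \<omega>)) > 0"
      then have "0-lipschitz_on UNIV (g (mu 1 \<omega>))" using lipconst_le_iff[OF gu, of 0] by simp
      then have "\<And>x. g (mu 1 \<omega>) x = g (mu 1 \<omega>) 0" using lipschitz_onD[of 0 UNIV "g (mu 1 \<omega>)"] by auto
      then have "g (mu 1 \<omega>) = (\<lambda>x. g (mu 1 \<omega>) 0)" by (intro ext) simp
      then show False using l2ne[OF \<omega>] const_l2 by metis
    qed
    then show ?thesis using KLip_ge[OF mu1[OF \<omega>]] K2_ge(1)[of \<omega>] by linarith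
  qed
  have gbarF: "\<And>m x. m \<in> {1..<n} \<Longrightarrow> (\<lambda>\<omega>. gbar m \<omega> x) \<in> borel_measurable F"
  proof -
    fix m x assume m: "m \<in> {1..<n}"
    have "subalgebra F (batch_sigma P Zs m)" unfolding F_def by (rule batch_mono) (use m in auto)
    then show "(\<lambda>\<omega>. gbar m \<omega> x) \<in> borel_measurable F"
      by (rule measurable_from_subalg) (rule gbar_meas, use m in auto)
  qed
  have K1_meas: "K1 \<in> borel_measurable F"
  proof (subst borel_measurable_iff_le, intro allI)
    fix t
    have eq: "{\<omega> \<in> space F. K1 \<omega> \<le> t} = {\<omega> \<in> space F. Kinf \<le> t \<and> (\<forall>m\<in>{1..<n}. \<forall>i. \<bar>gbar m \<omega> (xs i)\<bar> \<le> t)}"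
    proof -
      have "K1 \<omega> \<le> t \<longleftrightarrow> Kinf \<le> t \<and> (\<forall>m\<in>{1..<n}. \<forall>i. \<bar>gbar m \<omega> (xs i)\<bar> \<le> t)" if \<omega>: "\<omega> \<in> space P" for \<omega>
      proof -
        have "K1 \<omega> \<le> t \<longleftrightarrow> Kinf \<le> t \<and> (\<forall>m\<in>{1..<n}. supnorm (gbar m \<omega>) \<le> t)"
          unfolding K1_def by (subst Max_le_iff) auto
        also have "\<dots> \<longleftrightarrow> Kinf \<le> t \<and> (\<forall>m\<in>{1..<n}. \<forall>i. \<bar>gbar m \<omega> (xs i)\<bar> \<le> t)"
        proof -
          have "supnorm (gbar m \<omega>) \<le> t \<longleftrightarrow> (\<forall>i. \<bar>gbar m \<omega> (xs i)\<bar> \<le> t)" if "m \<in> {1..<n}" for m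
          proof -
            have gu: "good (gbar m \<omega>)" using good_gbar that \<omega> by auto
            show ?thesis using supnorm_le_iff[OF gu] sup_dense[OF xs good_cont[OF gu]] by auto
          qed
          then show ?thesis by auto
        qed
        finally show ?thesis .
      qed
      then show ?thesis using spF by auto
    qed
    have "Measurable.pred F (\<lambda>\<omega>. Kinf \<le> t \<and> (\<forall>m\<in>{1..<n}. \<forall>i. \<bar>gbar m \<omega> (xs i)\<bar> \<le> t))"
    proof (rule pred_intros_logic(3))
      show "Measurable.pred F (\<lambda>\<omega>. Kinf \<le> t)" by (cases "Kinf \<le> t") (simp_all add: pred_def)
      show "Measurable.pred F (\<lambda>\<omega>. \<forall>m\<in>{1..<n}. \<forall>i. \<bar>gbar m \<omega> (xs i)\<bar> \<le> t)"
      proof (rule pred_intros_finite(3))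
        fix m assume m: "m \<in> {1..<n}"
        show "Measurable.pred F (\<lambda>\<omega>. \<forall>i. \<bar>gbar m \<omega> (xs i)\<bar> \<le> t)"
        proof (rule pred_intros_countable(1))
          fix i
          have "(\<lambda>\<omega>. \<bar>gbar m \<omega> (xs i)\<bar>) \<in> borel_measurable F" using gbarF[OF m] by (rule borel_measurable_abs)
          then show "Measurable.pred F (\<lambda>\<omega>. \<bar>gbar m \<omega> (xs i)\<bar> \<le> t)"
            by (rule pred_le_helper)
        qed
      qed simp
    qed
    then show "{\<omega> \<in> space F. K1 \<omega> \<le> t} \<in> sets F" unfolding eq pred_def .
  qed
  have K2_meas: "K2 \<in> borel_measurable F"
  proof (subst borel_measurable_iff_le, intro allI)
    fix t
    have eq: "{\<omega> \<in> space F. K2 \<omega> \<le> t} = {\<omega> \<in> space F. KLip \<le> t \<and> (\<forall>m\<in>{1..<n}. 0 \<le> t \<and> (\<forall>i j. \<bar>gbar m \<omega> (xs i) - gbar m \<omega> (xs j)\<bar> \<le> t * dist (xs i) (xs j)))}"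
    proof -
      have "K2 \<omega> \<le> t \<longleftrightarrow> KLip \<le> t \<and> (\<forall>m\<in>{1..<n}. 0 \<le> t \<and> (\<forall>i j. \<bar>gbar m \<omega> (xs i) - gbar m \<omega> (xs j)\<bar> \<le> t * dist (xs i) (xs j)))" if \<omega>: "\<omega> \<in> space P" for \<omega>
      proof -
        have "K2 \<omega> \<le> t \<longleftrightarrow> KLip \<le> t \<and> (\<forall>m\<in>{1..<n}. lipconst (gbar m \<omega>) \<le> t)"
          unfolding K2_def by (subst Max_le_iff) auto
        also have "\<dots> \<longleftrightarrow> KLip \<le> t \<and> (\<forall>m\<in>{1..<n}. 0 \<le> t \<and> (\<forall>i j. \<bar>gbar m \<omega> (xs i) - gbar m \<omega> (xs j)\<bar> \<le> t * dist (xs i) (xs j)))"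
        proof -
          have "lipconst (gbar m \<omega>) \<le> t \<longleftrightarrow> 0 \<le> t \<and> (\<forall>i j. \<bar>gbar m \<omega> (xs i) - gbar m \<omega> (xs j)\<bar> \<le> t * dist (xs i) (xs j))" if "m \<in> {1..<n}" for m
          proof -
            have gu: "good (gbar m \<omega>)" using good_gbar that \<omega> by auto
            show ?thesis using lipconst_le_iff[OF gu] lip_dense[OF xs good_cont[OF gu]] by auto
          qed
          then show ?thesis by auto
        qed
        finally show ?thesis .
      qed
      then show ?thesis using spF by auto
    qed
    have "Measurable.pred F (\<lambda>\<omega>. KLip \<le> t \<and> (\<forall>m\<in>{1..<n}. 0 \<le> t \<and> (\<forall>i j. \<bar>gbar m \<omega> (xs i) - gbar m \<omega> (xs j)\<bar> \<le> t * dist (xs i) (xs j))))"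
    proof (rule pred_intros_logic(3))
      show "Measurable.pred F (\<lambda>\<omega>. KLip \<le> t)" by (cases "KLip \<le> t") (simp_all add: pred_def)
      show "Measurable.pred F (\<lambda>\<omega>. \<forall>m\<in>{1..<n}. 0 \<le> t \<and> (\<forall>i j. \<bar>gbar m \<omega> (xs i) - gbar m \<omega> (xs j)\<bar> \<le> t * dist (xs i) (xs j)))"
      proof (rule pred_intros_finite(3))
        fix m assume m: "m \<in> {1..<n}"
        show "Measurable.pred F (\<lambda>\<omega>. 0 \<le> t \<and> (\<forall>i j. \<bar>gbar m \<omega> (xs i) - gbar m \<omega> (xs j)\<bar> \<le> t * dist (xs i) (xs j)))"
        proof (rule pred_intros_logic(3))
          show "Measurable.pred F (\<lambda>\<omega>. 0 \<le> t)" by (cases "0 \<le> t") (simp_all add: pred_def)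
          show "Measurable.pred F (\<lambda>\<omega>. \<forall>i j. \<bar>gbar m \<omega> (xs i) - gbar m \<omega> (xs j)\<bar> \<le> t * dist (xs i) (xs j))"
          proof (rule pred_intros_countable(1), rule pred_intros_countable(1))
            fix i j
            have "(\<lambda>\<omega>. \<bar>gbar m \<omega> (xs i) - gbar m \<omega> (xs j)\<bar>) \<in> borel_measurable F"
              using gbarF[OF m] gbarF[OF m] by (intro borel_measurable_abs borel_measurable_diff)
            then show "Measurable.pred F (\<lambda>\<omega>. \<bar>gbar m \<omega> (xs i) - gbar m \<omega> (xs j)\<bar> \<le> t * dist (xs i) (xs j))"
              by (rule pred_le_helper)
          qed
        qed
      qed simp
    qed
    then show "{\<omega> \<in> space F. K2 \<omega> \<le> t} \<in> sets F" unfolding eq pred_def .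
  qed
  define \<kappa> where "\<kappa> = (\<lambda>\<omega>. \<epsilon> / (6 * K1 \<omega> * K2 \<omega>))"
  have kappa_meas: "\<kappa> \<in> borel_measurable F" unfolding \<kappa>_def
    by (rule borel_measurable_divide[OF borel_measurable_const borel_measurable_times[OF borel_measurable_times[OF borel_measurable_const K1_meas] K2_meas]])
  have kappa_pos: "\<And>\<omega>. \<omega> \<in> space P \<Longrightarrow> \<kappa> \<omega> > 0" unfolding \<kappa>_def using K1_pos K2_pos eps by simp
  have core: "3/2 * \<kappa> \<omega> \<le> Dfun \<nu> (\<lambda>k. Zs n k \<omega>) (M n \<omega>)" if \<omega>: "\<omega> \<in> S" for \<omega>
  proof -
    have \<omega>P: "\<omega> \<in> space P" using \<omega> unfolding S_def by simp
    have Mn: "M n \<omega> \<ge> 1" using M_pos[OF _ _ \<omega>P] n2 by simp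
    let ?D = "Dfun \<nu> (\<lambda>k. Zs n k \<omega>) (M n \<omega>)"
    have ne: "fam \<omega> \<times> fam \<omega> \<noteq> {}" using mu1[OF \<omega>P] unfolding fam_def by auto
    have "(SUP gh \<in> fam \<omega> \<times> fam \<omega>.
             \<bar>cov_nu \<nu> (fst gh) (snd gh) - emp_cov (\<lambda>k. Zs n k \<omega>) (M n \<omega>) (fst gh) (snd gh)\<bar>) \<le> 4 * K1 \<omega> * K2 \<omega> * ?D"
    proof (rule cSUP_least[OF ne])
      fix gh assume gh: "gh \<in> fam \<omega> \<times> fam \<omega>"
      have ga: "fst gh \<in> fam \<omega>" and gb: "snd gh \<in> fam \<omega>" using gh by (auto simp: mem_Times_iff)
      have a: "good (fst gh) \<and> (\<forall>x. \<bar>fst gh x\<bar> \<le> K1 \<omega>) \<and> (K2 \<omega>)-lipschitz_on UNIV (fst gh)"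
        by (rule fam_good[OF \<omega>P ga])
      have b: "good (snd gh) \<and> (\<forall>x. \<bar>snd gh x\<bar> \<le> K1 \<omega>) \<and> (K2 \<omega>)-lipschitz_on UNIV (snd gh)"
        by (rule fam_good[OF \<omega>P gb])
      have a1: "\<And>x. \<bar>fst gh x\<bar> \<le> K1 \<omega>" and a2: "(K2 \<omega>)-lipschitz_on UNIV (fst gh)" using a by blast+
      have b1: "\<And>x. \<bar>snd gh x\<bar> \<le> K1 \<omega>" and b2: "(K2 \<omega>)-lipschitz_on UNIV (snd gh)" using b by blast+
      show "\<bar>cov_nu \<nu> (fst gh) (snd gh) - emp_cov (\<lambda>k. Zs n k \<omega>) (M n \<omega>) (fst gh) (snd gh)\<bar> \<le> 4 * K1 \<omega> * K2 \<omega> * ?D"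
        by (rule cov_bound[OF nu_prob nu_sets Inorm Mn a1 b1 K2_pos[OF \<omega>P] a2 b2])
    qed
    then have "\<epsilon> \<le> 4 * K1 \<omega> * K2 \<omega> * ?D" using \<omega> unfolding S_def by simp
    then show ?thesis unfolding \<kappa>_def using K1_pos[OF \<omega>P] K2_pos[OF \<omega>P]
      by (simp add: field_simps)
  qed
  show ?thesis
    unfolding goal_eq
  proof (cases "S \<in> sets P")
    case False
    have "(\<lambda>x. ennreal (indicator S x)) \<notin> borel_measurable P"
    proof
      assume "(\<lambda>x. ennreal (indicator S x)) \<in> borel_measurable P"
      from measurable_sets[OF this, of "{1}"] have "(\<lambda>x. ennreal (indicator S x)) -` {1} \<inter> space P \<in> sets P" by simp
      moreover have "(\<lambda>x. ennreal (indicator S x)) -` {1} \<inter> space P = S"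
        unfolding S_def by (auto simp: indicator_def)
      ultimately have "S \<in> sets P" by (simp only:)
      then show False using False by (rule notE[rotated])
    qed
    then have "\<And>\<omega>. real_cond_exp P F (indicator S) \<omega> \<le> 0"
      unfolding real_cond_exp_def nn_cond_exp_def by simp
    moreover have "\<And>\<omega>. h \<omega> > 0" unfolding h_def using C_pos by simp
    ultimately have "\<And>\<omega>. real_cond_exp P F (indicator S) \<omega> \<le> h \<omega>"
      by (rule order_trans[OF _ less_imp_le])
    then show "AE \<omega> in P. real_cond_exp P F (indicator S) \<omega> \<le> h \<omega>" by (rule AE_I2)
  next
    case True
    have Sind: "integrable P (indicator S :: 'w \<Rightarrow> real)" using True by (intro integrable_real_indicator) (auto simp: less_top[symmetric])
    have rvnu: "\<And>i k. i \<ge> 1 \<Longrightarrow> Zs i k \<in> measurable P \<nu>"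
      using rv unfolding measurable_cong_sets[OF refl nu_sets] by auto
    have spnu: "space \<nu> = UNIV" using sets_eq_imp_space_eq[OF nu_sets] by simp
    define B where "B = (\<lambda>k (q::rat). {\<omega> \<in> space P. M n \<omega> = k \<and> \<kappa> \<omega> \<le> real_of_rat q \<and> real_of_rat q \<le> 3/2 * \<kappa> \<omega>})"
    define Q where "Q = (\<lambda>k (q::rat). {zs \<in> space (PiM {..<k} (\<lambda>_. \<nu>)). real_of_rat q \<le> Dfun \<nu> zs k})"
    define E where "E = (\<lambda>k q. {\<omega>\<in>space P. (\<lambda>j\<in>{..<k}. Zs n j \<omega>) \<in> Q k q})"
    have claim: "AE \<omega> in P. \<omega> \<in> B k q \<longrightarrow> real_cond_exp P F (indicator S) \<omega> \<le> C * exp (- c * real k * phi DIM('x) \<alpha> (real_of_rat q))" for k q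
    proof (cases "k \<ge> 1 \<and> real_of_rat q > 0")
      case False
      have "B k q = {}"
      proof (rule ccontr)
        assume "B k q \<noteq> {}"
        then obtain \<omega> where \<omega>: "\<omega> \<in> B k q" by blast
        then have \<omega>P: "\<omega> \<in> space P" unfolding B_def by simp
        have "M n \<omega> \<ge> 1" using M_pos[OF _ _ \<omega>P] n2 by simp
        moreover have "\<kappa> \<omega> > 0" by (rule kappa_pos[OF \<omega>P])
        moreover have "\<kappa> \<omega> \<le> real_of_rat q" "M n \<omega> = k" using \<omega> unfolding B_def by auto
        ultimately have "k \<ge> 1 \<and> real_of_rat q > 0" by (metis less_le_trans)
        then show False using False by blast
      qed
      then show ?thesis by simp
    next
      case True
      then have k: "k \<ge> 1" and q: "real_of_rat q > 0" by auto
      have BF: "B k q \<in> sets F"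
      proof -
        have "M n -` {k} \<inter> space F \<in> sets F" using measurable_sets[OF M_meas[folded F_def], of "{k}"] by simp
        moreover have "{\<omega> \<in> space F. \<kappa> \<omega> \<le> real_of_rat q} \<in> sets F"
          using kappa_meas unfolding borel_measurable_iff_le by blast
        moreover have "{\<omega> \<in> space F. real_of_rat q \<le> 3/2 * \<kappa> \<omega>} \<in> sets F"
        proof -
          have "(\<lambda>\<omega>. 3/2 * \<kappa> \<omega>) \<in> borel_measurable F"
            by (rule borel_measurable_times[OF borel_measurable_const kappa_meas])
          then show ?thesis unfolding borel_measurable_iff_ge by blast
        qed
        ultimately have "(M n -` {k} \<inter> space F) \<inter> {\<omega> \<in> space F. \<kappa> \<omega> \<le> real_of_rat q} \<inter> {\<omega> \<in> space F. real_of_rat q \<le> 3/2 * \<kappa> \<omega>} \<in> sets F"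
          by (meson sets.Int)
        moreover have "(M n -` {k} \<inter> space F) \<inter> {\<omega> \<in> space F. \<kappa> \<omega> \<le> real_of_rat q} \<inter> {\<omega> \<in> space F. real_of_rat q \<le> 3/2 * \<kappa> \<omega>} = B k q"
          unfolding B_def spF by auto
        ultimately show ?thesis by simp
      qed
      have QS: "Q k q \<in> sets (PiM {..<k} (\<lambda>_. \<nu>))"
        using Dfun_meas[OF nu_prob nu_sets Inorm k] unfolding borel_measurable_iff_ge Q_def by blast
      have Xm: "(\<lambda>\<omega>. \<lambda>j\<in>{..<k}. Zs n j \<omega>) \<in> measurable P (PiM {..<k} (\<lambda>_. \<nu>))"
        using rvnu n2 by (intro measurable_restrict) auto
      have EP: "E k q \<in> sets P"
      proof -
        have "(\<lambda>\<omega>. \<lambda>j\<in>{..<k}. Zs n j \<omega>) -` Q k q \<inter> space P \<in> sets P" by (rule measurable_sets[OF Xm QS])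
        moreover have "(\<lambda>\<omega>. \<lambda>j\<in>{..<k}. Zs n j \<omega>) -` Q k q \<inter> space P = E k q" unfolding E_def by auto
        ultimately show ?thesis by simp
      qed
      have indep: "prob (A \<inter> E k q) = prob A * measure (PiM {..<k} (\<lambda>_. \<nu>)) (Q k q)" if A: "A \<in> sets F" for A
        unfolding E_def by (rule indep_batch[OF P nu_sets Zs_indep Zs_law n2 k A[unfolded F_def] QS])
      have spF_F: "space P \<in> sets F" using sets.top[of F] spF by simp
      have pE: "prob (E k q) = measure (PiM {..<k} (\<lambda>_. \<nu>)) (Q k q)"
        using indep[OF spF_F] EP by (simp add: prob_space Int_absorb1 sets.sets_into_space)
      have FGk: "measure (PiM {..<k} (\<lambda>_. \<nu>)) (Q k q) \<le> C * exp (- c * real k * phi DIM('x) \<alpha> (real_of_rat q))"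
        using FG[OF k q] unfolding Q_def Dfun_def .
      define T where "T = E k q \<union> (space P - B k q)"
      have TP: "T \<in> sets P" unfolding T_def using EP FP[OF BF] by auto
      have Tind: "integrable P (indicator T :: 'w \<Rightarrow> real)" using TP by (intro integrable_real_indicator) (auto simp: less_top[symmetric])
      have ST: "(indicator S \<omega> :: real) \<le> indicator T \<omega>" if \<omega>P: "\<omega> \<in> space P" for \<omega> :: 'w
      proof (cases "\<omega> \<in> S")
        case True
        have "\<omega> \<in> T"
        proof (cases "\<omega> \<in> B k q")
          case True
          then have Mk: "M n \<omega> = k" and qk: "real_of_rat q \<le> 3/2 * \<kappa> \<omega>" unfolding B_def by auto
          have "real_of_rat q \<le> Dfun \<nu> (\<lambda>j. Zs n j \<omega>) k" using core[OF \<open>\<omega> \<in> S\<close>] qk Mk by simp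
          also have "Dfun \<nu> (\<lambda>j. Zs n j \<omega>) k = Dfun \<nu> (\<lambda>j\<in>{..<k}. Zs n j \<omega>) k"
            by (rule Dfun_cong[OF nu_prob nu_sets Inorm]) simp
          finally have "real_of_rat q \<le> Dfun \<nu> (\<lambda>j\<in>{..<k}. Zs n j \<omega>) k" .
          moreover have "(\<lambda>j\<in>{..<k}. Zs n j \<omega>) \<in> space (PiM {..<k} (\<lambda>_. \<nu>))"
            unfolding space_PiM spnu by auto
          ultimately have "\<omega> \<in> E k q" unfolding E_def Q_def using \<omega>P by auto
          then show ?thesis unfolding T_def by simp
        next
          case False
          then show ?thesis unfolding T_def using \<omega>P by simp
        qed
        then show ?thesis by simp
      next
        case False
        then show ?thesis by (simp add: indicator_def)
      qed
      have mono: "AE \<omega> in P. real_cond_exp P F (indicator S) \<omega> \<le> real_cond_exp P F (indicator T) \<omega>"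
        by (rule sigma_finite_subalgebra.real_cond_exp_mono[OF sfs AE_I2 Sind Tind]) (rule ST)
      define p where "p = prob (E k q)"
      define gT where "gT = (\<lambda>\<omega>. p * indicator (B k q) \<omega> + indicator (space P - B k q) \<omega>)"
      have BcF: "space P - B k q \<in> sets F" using sets.compl_sets[OF BF] spF by simp
      have gTF: "gT \<in> borel_measurable F"
        unfolding gT_def using BF BcF by (intro borel_measurable_add borel_measurable_times borel_measurable_const borel_measurable_indicator)
      have gTP: "gT \<in> borel_measurable P" by (rule measurable_from_subalg[OF subalg gTF])
      have gTint: "integrable P gT"
        unfolding gT_def using FP[OF BF] FP[OF BcF] by (intro Bochner_Integration.integrable_add integrable_mult_right integrable_real_indicator) (auto simp: less_top[symmetric])
      have charact: "AE \<omega> in P. real_cond_exp P F (indicator T) \<omega> = gT \<omega>"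
      proof (rule sigma_finite_subalgebra.real_cond_exp_charact[OF sfs _ Tind gTint gTF])
        fix A assume AF: "A \<in> sets F"
        have AP: "A \<in> sets P" by (rule FP[OF AF])
        have ABF: "A \<inter> B k q \<in> sets F" using AF BF by (rule sets.Int)
        have Asp: "A \<subseteq> space P" using sets.sets_into_space[OF AP] .
        have "(\<integral>x\<in>A. (indicator T x :: real) \<partial>P) = (\<integral>x. (indicator (A \<inter> T) x :: real) \<partial>P)"
          unfolding set_lebesgue_integral_def by (simp add: indicator_inter_arith)
        also have "\<dots> = prob (A \<inter> T)" using AP TP by (simp add: Int_absorb2 sets.sets_into_space)
        also have "A \<inter> T = (A \<inter> B k q \<inter> E k q) \<union> (A \<inter> (space P - B k q))" unfolding T_def using Asp by auto
        also have "prob \<dots> = prob (A \<inter> B k q \<inter> E k q) + prob (A \<inter> (space P - B k q))"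
          by (rule finite_measure_Union) (use AP FP[OF BF] EP in auto)
        also have "prob (A \<inter> B k q \<inter> E k q) = prob (A \<inter> B k q) * p"
          unfolding p_def pE by (rule indep[OF ABF])
        finally have L: "(\<integral>x\<in>A. (indicator T x :: real) \<partial>P) = prob (A \<inter> B k q) * p + prob (A \<inter> (space P - B k q))" .
        have "(\<integral>x\<in>A. gT x \<partial>P) = (\<integral>x. p * indicator (A \<inter> B k q) x + indicator (A \<inter> (space P - B k q)) x \<partial>P)"
          unfolding set_lebesgue_integral_def gT_def by (intro Bochner_Integration.integral_cong refl) (simp add: indicator_inter_arith algebra_simps)
        also have "\<dots> = p * prob (A \<inter> B k q) + prob (A \<inter> (space P - B k q))"
          using AP FP[OF BF] FP[OF BcF]
          by (subst Bochner_Integration.integral_add) (auto simp: Int_absorb2 sets.sets_into_space less_top[symmetric] intro!: integrable_real_indicator)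
        finally show "(\<integral>x\<in>A. (indicator T x :: real) \<partial>P) = (\<integral>x\<in>A. gT x \<partial>P)" using L by simp
      qed
      have pb: "p \<le> C * exp (- c * real k * phi DIM('x) \<alpha> (real_of_rat q))" unfolding p_def pE by (rule FGk)
      show ?thesis using mono charact
      proof eventually_elim
        case (elim \<omega>)
        show ?case
        proof
          assume "\<omega> \<in> B k q"
          then have "real_cond_exp P F (indicator T) \<omega> = p" using elim(2) by (simp add: gT_def)
          then show "real_cond_exp P F (indicator S) \<omega> \<le> C * exp (- c * real k * phi DIM('x) \<alpha> (real_of_rat q))"
            using elim(1) pb by linarith
        qed
      qed
    qed
    have "AE \<omega> in P. \<forall>kq::nat\<times>rat. \<omega> \<in> B (fst kq) (snd kq) \<longrightarrow> real_cond_exp P F (indicator S) \<omega> \<le> C * exp (- c * real (fst kq) * phi DIM('x) \<alpha> (real_of_rat (snd kq)))"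
      unfolding AE_all_countable using claim by blast
    then show "AE \<omega> in P. real_cond_exp P F (indicator S) \<omega> \<le> h \<omega>"
    proof (rule AE_mp[OF _ AE_I2], intro impI)
      fix \<omega> assume \<omega>P: "\<omega> \<in> space P"
        and H: "\<forall>kq::nat\<times>rat. \<omega> \<in> B (fst kq) (snd kq) \<longrightarrow> real_cond_exp P F (indicator S) \<omega> \<le> C * exp (- c * real (fst kq) * phi DIM('x) \<alpha> (real_of_rat (snd kq)))"
      have kp: "\<kappa> \<omega> > 0" by (rule kappa_pos[OF \<omega>P])
      then have "\<kappa> \<omega> < 3/2 * \<kappa> \<omega>" by simp
      then obtain r where r: "r \<in> \<rat>" "\<kappa> \<omega> < r" "r < 3/2 * \<kappa> \<omega>" using Rats_dense_in_real by blast
      then obtain q where rq: "r = real_of_rat q" using Rats_cases by blast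
      have "\<omega> \<in> B (M n \<omega>) q" unfolding B_def using \<omega>P r rq by auto
      then have "real_cond_exp P F (indicator S) \<omega> \<le> C * exp (- c * real (M n \<omega>) * phi DIM('x) \<alpha> (real_of_rat q))"
        using H[rule_format, of "(M n \<omega>, q)"] by simp
      also have "\<dots> \<le> C * exp (- c * real (M n \<omega>) * phi DIM('x) \<alpha> (\<kappa> \<omega>))"
      proof -
        have "phi DIM('x) \<alpha> (\<kappa> \<omega>) \<le> phi DIM('x) \<alpha> (real_of_rat q)"
          using phi_mono[of "DIM('x)" \<alpha> "\<kappa> \<omega>" "real_of_rat q"] A_alpha kp r rq by simp
        then have "c * real (M n \<omega>) * phi DIM('x) \<alpha> (\<kappa> \<omega>) \<le> c * real (M n \<omega>) * phi DIM('x) \<alpha> (real_of_rat q)"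
          using c_pos by (intro mult_left_mono) auto
        then show ?thesis using C_pos by simp
      qed
      also have "\<dots> = h \<omega>" unfolding h_def \<kappa>_def by simp
      finally show "real_cond_exp P F (indicator S) \<omega> \<le> h \<omega>" .
    qed
  qed
qed

end
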